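(* Let $\mathcal E$ be the set of parameters $\alpha \in (0,1)$ for which the map $T_\alpha$ does not have the matching property, i.e. for which there are no non-negative integers $M,N$ with $T_\alpha^M(\alpha) = T_\alpha^N(1-\alpha)$. Then $\mathcal E$ has Lebesgue measure zero and Hausdorff dimension $1$.
   Context: For $\alpha \in (0,1)$ let $D_\alpha = \bigcup_{n \ge 1} \big[ \frac{1}{n+\alpha}, \frac1n \big] \subseteq [0,1]$, let $D_\alpha^{\mathsf c} = [0,1]\setminus D_\alpha$, and let $I_\alpha = [\min\{\alpha,1-\alpha\},1]$. The flipped $\alpha$-continued fraction map $T_\alpha : I_\alpha \to I_\alpha$ is defined by $T_\alpha(x) = \frac1x - \lfloor \frac1x \rfloor$ if $x \in D_\alpha^{\mathsf c}$ and $T_\alpha(x) = 1 + \lfloor \frac1x \rfloor - \frac1x$ if $x \in D_\alpha$. The discontinuity points of $T_\alpha$ are the points $\frac1{k+\alpha}$, $k\ge1$, whose left and right limit values are $\alpha$ and $1-\alpha$ respectively; $T_\alpha$ is said to have matching if $T_\alpha^M(\alpha)=T_\alpha^N(1-\alpha)$ for some non-negative integers $M,N$. *)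

theory Defs
  imports "HOL-Analysis.Analysis"
begin

definition D_alpha :: "real \<Rightarrow> real set" where
  "D_alpha a = (\<Union>n\<in>{1::nat..}. {1 / (real n + a) .. 1 / real n})"

definition I_alpha :: "real \<Rightarrow> real set" where
  "I_alpha a = {min a (1 - a) .. 1}"

text \<open>The map T_alpha; only its values on I_alpha matter (orbits of a and 1-a stay there).\<close>
definition T_alpha :: "real \<Rightarrow> real \<Rightarrow> real" where
  "T_alpha a x = (if x \<in> D_alpha a then 1 + of_int \<lfloor>1 / x\<rfloor> - 1 / x
                  else 1 / x - of_int \<lfloor>1 / x\<rfloor>)"

definition has_matching :: "real \<Rightarrow> bool" where
  "has_matching a \<longleftrightarrow> (\<exists>M N :: nat. (T_alpha a ^^ M) a = (T_alpha a ^^ N) (1 - a))"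

definition non_matching_set :: "real set" where
  "non_matching_set = {a \<in> {0<..<1}. \<not> has_matching a}"

text \<open>Contribution diam(U)^s of a covering set, with the usual conventions
  diam(empty)^s = 0 and diam(U)^0 = 1 for nonempty U.\<close>
definition hcost :: "real \<Rightarrow> real set \<Rightarrow> ennreal" where
  "hcost s U = (if U = {} then 0 else if s = 0 then 1 else ennreal (diameter U powr s))"

definition hausdorff_pre :: "real \<Rightarrow> real \<Rightarrow> real set \<Rightarrow> ennreal" where
  "hausdorff_pre s \<delta> E =
     (INF U \<in> {U :: nat \<Rightarrow> real set. E \<subseteq> (\<Union>i. U i) \<and>
                 (\<forall>i. bounded (U i) \<and> diameter (U i) \<le> \<delta>)}.
        \<Sum>i. hcost s (U i))"

definition hausdorff_measure :: "real \<Rightarrow> real set \<Rightarrow> ennreal" where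
  "hausdorff_measure s E = (SUP \<delta> \<in> {0<..}. hausdorff_pre s \<delta> E)"

definition hausdorff_dim :: "real set \<Rightarrow> real" where
  "hausdorff_dim E = Inf {s. 0 \<le> s \<and> hausdorff_measure s E = 0}"

end

theory Submission
  imports Defs
begin

definition Gm :: "real \<Rightarrow> real" where "Gm x = 1/x - of_int \<lfloor>1/x\<rfloor>"
definition phi :: "real \<Rightarrow> real \<Rightarrow> real" where "phi a f = (if f \<le> a then 1 - f else f)"
definition uu :: "nat \<Rightarrow> real \<Rightarrow> real" where "uu i s = 1 - 1/(real i + s)"

lemma Gm_ge0: "0 \<le> Gm x" unfolding Gm_def by linarith
lemma Gm_lt1: "Gm x < 1" unfolding Gm_def by linarith

lemma Gm_inv: assumes "d \<ge> 1" "0 \<le> s" "s < 1" shows "Gm (1/(real d + s)) = s"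
proof -
  have "1/(1/(real d + s)) = real d + s" using assms by simp
  moreover have "\<lfloor>real d + s\<rfloor> = int d" using assms by linarith
  ultimately show ?thesis unfolding Gm_def by simp
qed

lemma x_decomp: assumes "0 < x" "x \<le> 1"
  shows "nat \<lfloor>1/x\<rfloor> \<ge> 1" "x = 1/(real (nat \<lfloor>1/x\<rfloor>) + Gm x)"
proof -
  have "1/x \<ge> 1" using assms by simp
  then show "nat \<lfloor>1/x\<rfloor> \<ge> 1" by linarith
  have "real (nat \<lfloor>1/x\<rfloor>) + Gm x = 1/x" unfolding Gm_def using \<open>1/x \<ge> 1\<close> by linarith
  then show "x = 1/(real (nat \<lfloor>1/x\<rfloor>) + Gm x)" using assms by simp
qed

lemma D_iff: assumes "0 < a" "a < 1" "0 < x" "x \<le> 1"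
  shows "x \<in> D_alpha a \<longleftrightarrow> Gm x \<le> a"
proof
  assume "x \<in> D_alpha a"
  then obtain n :: nat where n: "n \<ge> 1" "1/(real n + a) \<le> x" "x \<le> 1/real n"
    unfolding D_alpha_def by auto
  have "real n \<le> 1/x" using n assms by (simp add: field_simps)
  moreover have "1/x \<le> real n + a"
  proof -
    have "1 \<le> x * (real n + a)" using n(2) assms by (simp add: divide_le_eq mult.commute)
    then show ?thesis using assms by (simp add: divide_le_eq mult.commute)
  qed
  ultimately have "\<lfloor>1/x\<rfloor> = int n" using assms by linarith
  then show "Gm x \<le> a" unfolding Gm_def using \<open>1/x \<le> real n + a\<close> by simp
next
  assume g: "Gm x \<le> a"
  define n where "n = nat \<lfloor>1/x\<rfloor>"
  have n1: "n \<ge> 1" using x_decomp assms n_def by auto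
  have fl: "\<lfloor>1/x\<rfloor> \<ge> 1" proof - have "1 \<le> 1/x" using assms by simp then show ?thesis by (simp add: le_floor_iff) qed
  have fl0: "real n = of_int \<lfloor>1/x\<rfloor>" unfolding n_def using fl by (intro of_nat_nat) linarith
  have e: "1/x = real n + Gm x" unfolding Gm_def fl0 by simp
  have "1/(real n + a) \<le> x"
  proof -
    have "1/x \<le> real n + a" using e g by simp
    then have "1 \<le> x * (real n + a)" using assms by (simp add: divide_le_eq mult.commute)
    then show ?thesis using assms n1 by (simp add: divide_le_eq mult.commute add_pos_pos)
  qed
  moreover have "x \<le> 1/real n"
  proof -
    have "real n \<le> 1/x" using e Gm_ge0[of x] by simp
    then have "real n * x \<le> 1" using assms by (simp add: le_divide_eq)
    then show ?thesis using n1 by (simp add: le_divide_eq mult.commute)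
  qed
  ultimately show "x \<in> D_alpha a" unfolding D_alpha_def using n1 by auto
qed

lemma T_eq: assumes "0 < a" "a < 1" "0 < x" "x \<le> 1"
  shows "T_alpha a x = phi a (Gm x)"
  using D_iff[OF assms] unfolding T_alpha_def phi_def Gm_def by auto

lemma a_decomp: assumes "1/2 < a" "a < 1" shows "a = 1/(1 + Gm a)" "0 < Gm a"
proof -
  have "1 < 1/a" "1/a < 2" using assms by (auto simp: field_simps)
  then have fl: "\<lfloor>1/a\<rfloor> = 1" by linarith
  then have g: "Gm a = 1/a - 1" unfolding Gm_def by simp
  then show "a = 1/(1 + Gm a)" using assms by simp
  show "0 < Gm a" using g \<open>1 < 1/a\<close> by simp
qed

lemma uu_range: assumes "i \<ge> 1" "0 < s" shows "0 < uu i s" "uu i s < 1"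
proof -
  have "1 < real i + s" using assms by simp
  then show "0 < uu i s" "uu i s < 1" unfolding uu_def using assms by (auto simp: field_simps)
qed

lemma Gm_uu_ge2: assumes "i \<ge> 2" "0 < s" "s < 1" shows "Gm (uu i s) = 1/(real i - 1 + s)"
proof -
  have p: "1 < real i - 1 + s" using assms by simp
  have "uu i s = 1/(real 1 + 1/(real i - 1 + s))" unfolding uu_def using p
    by (simp add: field_simps)
  moreover have "0 \<le> 1/(real i - 1 + s)" "1/(real i - 1 + s) < 1" using p by auto
  ultimately show ?thesis using Gm_inv[of 1] by simp
qed

lemma Gm_uu1: assumes "0 < s" "s < 1" shows "Gm (uu 1 s) = Gm s"
proof -
  have "1/(uu 1 s) = 1/s + 1" unfolding uu_def using assms by (simp add: field_simps)
  then show ?thesis unfolding Gm_def by simp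
qed

lemma flip_uu: assumes "0 < w" "w < 1"
  shows "nat \<lfloor>1/w\<rfloor> \<ge> 1" "1 - w = uu (nat \<lfloor>1/w\<rfloor>) (Gm w)"
proof -
  show "nat \<lfloor>1/w\<rfloor> \<ge> 1" using x_decomp assms by simp
  have "w = 1/(real (nat \<lfloor>1/w\<rfloor>) + Gm w)" using x_decomp assms by simp
  then show "1 - w = uu (nat \<lfloor>1/w\<rfloor>) (Gm w)" unfolding uu_def by simp
qed

context
  fixes a :: real
  assumes ah: "1/2 < a" "a < 1"
begin

abbreviation "T \<equiv> T_alpha a"

lemma a0: "0 < a" using ah by simp

lemma le_a_iff: assumes "0 \<le> s" shows "1/(1+s) \<le> a \<longleftrightarrow> Gm a \<le> s"
proof -
  have e: "a = 1/(1 + Gm a)" "0 < Gm a" using a_decomp ah by auto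
  have "1/(1+s) \<le> 1/(1 + Gm a) \<longleftrightarrow> 1 + Gm a \<le> 1 + s" using assms e(2)
    by (simp add: field_simps)
  then show ?thesis using e by simp
qed

lemma T_uu_ge3: assumes "i \<ge> 3" "0 < s" "s < 1" shows "T (uu i s) = uu (i - 1) s"
proof -
  have "T (uu i s) = phi a (Gm (uu i s))"
    using T_eq[OF a0 ah(2)] uu_range[of i s] assms by fastforce
  also have "Gm (uu i s) = 1/(real i - 1 + s)" using Gm_uu_ge2 assms by simp
  also have "1/(real i - 1 + s) \<le> a"
  proof -
    have "2 \<le> real i - 1 + s" using assms by simp
    then have "1/(real i - 1 + s) \<le> 1/2" by (simp add: field_simps)
    then show ?thesis using ah by simp
  qed
  then have "phi a (1/(real i - 1 + s)) = uu (i - 1) s" unfolding phi_def uu_def using assms by (simp add: of_nat_diff)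
  finally show ?thesis .
qed

lemma T_uu2: assumes "0 < s" "s < 1" shows "T (uu 2 s) = phi a (1/(1+s))"
proof -
  have "T (uu 2 s) = phi a (Gm (uu 2 s))"
    using T_eq[OF a0 ah(2)] uu_range[of 2 s] assms by fastforce
  also have "Gm (uu 2 s) = 1/(1 + s)" using Gm_uu_ge2[of 2 s] assms by simp
  finally show ?thesis .
qed

lemma T_uu1: assumes "0 < s" "s < 1" shows "T (uu 1 s) = phi a (Gm s)"
proof -
  have "T (uu 1 s) = phi a (Gm (uu 1 s))"
    using T_eq[OF a0 ah(2)] uu_range[of 1 s] assms by fastforce
  then show ?thesis using Gm_uu1 assms by simp
qed

lemma T_v: assumes "0 < s" "s < 1" shows "T (1/(1+s)) = phi a s"
proof -
  have "T (1/(1+s)) = phi a (Gm (1/(1+s)))"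
    using T_eq[OF a0 ah(2)] assms by simp
  then show ?thesis using Gm_inv[of 1 s] assms by simp
qed

lemma desc1: assumes "Gm a \<le> s" "0 < s" "s < 1" "m \<ge> 1"
  shows "(T ^^ (m - 1)) (uu m s) = uu 1 s"
  using assms(4)
proof (induction m rule: dec_induct)
  case base then show ?case by simp
next
  case (step m)
  have "T (uu (Suc m) s) = uu m s"
  proof (cases "m = 1")
    case True
    have "T (uu 2 s) = phi a (1/(1+s))" using T_uu2 assms by simp
    also have "\<dots> = uu 1 s" unfolding phi_def uu_def using le_a_iff[of s] assms by simp
    finally show ?thesis using True by (simp add: numeral_2_eq_2)
  next
    case False
    then show ?thesis using T_uu_ge3[of "Suc m" s] assms step by simp
  qed
  then have "(T ^^ (Suc m - 1)) (uu (Suc m) s) = (T ^^ (m - 1)) (uu m s)"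
    using step(1) by (metis Suc_diff_le diff_Suc_1 funpow_Suc_right comp_apply)
  then show ?case using step by simp
qed

lemma desc2: assumes "s < Gm a" "0 < s" "s < 1" "m \<ge> 2"
  shows "(T ^^ (m - 1)) (uu m s) = 1/(1+s)"
  using assms(4)
proof (induction m rule: dec_induct)
  case base
  have "T (uu 2 s) = phi a (1/(1+s))" using T_uu2 assms by simp
  also have "\<dots> = 1/(1+s)" unfolding phi_def using le_a_iff[of s] assms by simp
  finally show ?case by simp
next
  case (step m)
  have "T (uu (Suc m) s) = uu m s" using T_uu_ge3[of "Suc m" s] assms step by simp
  then have "(T ^^ (Suc m - 1)) (uu (Suc m) s) = (T ^^ (m - 1)) (uu m s)"
    using step(1) by (metis Suc_diff_le diff_Suc_1 funpow_Suc_right comp_apply le_trans one_le_numeral)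
  then show ?case using step by simp
qed

definition nxt :: "nat \<Rightarrow> nat" where
  "nxt k = (if (Gm ^^ (Suc k)) a < Gm a then Suc k else Suc (Suc k))"

lemma visit:
  assumes pos: "\<And>j. 0 < (Gm ^^ j) a"
  shows "\<exists>j. (T ^^ j) (phi a ((Gm ^^ k) a)) = phi a ((Gm ^^ nxt k) a)"
proof -
  define w where "w = (Gm ^^ k) a"
  define s where "s = (Gm ^^ Suc k) a"
  have w01: "0 < w" "w < 1" using pos[of k] ah Gm_lt1 unfolding w_def by (cases k; auto)+
  have s01: "0 < s" "s < 1" using pos[of "Suc k"] Gm_lt1 unfolding s_def by auto
  have sw: "s = Gm w" unfolding s_def w_def by simp
  define m where "m = nat \<lfloor>1/w\<rfloor>"
  have m1: "m \<ge> 1" and wm: "w = 1/(real m + s)" using x_decomp[of w] w01 sw m_def by auto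
  show ?thesis
  proof (cases "w \<le> a")
    case False
    then have "1/w < 2" using ah w01 by (simp add: field_simps)
    then have "m = 1" using m1 unfolding m_def by linarith
    then have w1: "w = 1/(1+s)" using wm by simp
    then have "s < Gm a" using le_a_iff[of s] s01 False by simp
    then have "nxt k = Suc k" unfolding nxt_def s_def by simp
    moreover have "T (phi a w) = phi a s" using False T_v s01 w1 unfolding phi_def by simp
    ultimately show ?thesis unfolding w_def s_def by (intro exI[of _ 1]) simp
  next
    case True
    then have pw: "phi a w = uu m s" unfolding phi_def uu_def using wm by simp
    show ?thesis
    proof (cases "Gm a \<le> s")
      case True
      then have "nxt k = Suc (Suc k)" unfolding nxt_def s_def by simp
      have "(T ^^ m) (uu m s) = T ((T ^^ (m - 1)) (uu m s))"
        using m1 by (metis Suc_diff_le diff_Suc_1 funpow.simps(2) comp_apply)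
      also have "\<dots> = phi a (Gm s)" using desc1 True s01 m1 T_uu1 by simp
      also have "Gm s = (Gm ^^ Suc (Suc k)) a" unfolding s_def by simp
      finally show ?thesis using pw \<open>nxt k = _\<close> unfolding w_def by metis
    next
      case False
      then have "nxt k = Suc k" unfolding nxt_def s_def by simp
      have "m \<ge> 2"
      proof (rule ccontr)
        assume "\<not> m \<ge> 2"
        then have "m = 1" using m1 by simp
        then have "w = 1/(1+s)" using wm by simp
        then show False using le_a_iff[of s] s01 False \<open>w \<le> a\<close> by simp
      qed
      have "(T ^^ m) (uu m s) = T ((T ^^ (m - 1)) (uu m s))"
        using m1 by (metis Suc_diff_le diff_Suc_1 funpow.simps(2) comp_apply)
      also have "\<dots> = phi a s" using desc2 False s01 \<open>m \<ge> 2\<close> T_v by simp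
      finally show ?thesis using pw \<open>nxt k = _\<close> unfolding w_def s_def by metis
    qed
  qed
qed

definition reach :: "real \<Rightarrow> nat \<Rightarrow> bool" where
  "reach z k \<longleftrightarrow> (\<exists>i. (T ^^ i) z = phi a ((Gm ^^ k) a))"

lemma reach_nxt: assumes "\<And>j. 0 < (Gm ^^ j) a" "reach z k" shows "reach z (nxt k)"
proof -
  obtain i where i: "(T ^^ i) z = phi a ((Gm ^^ k) a)" using assms(2) unfolding reach_def by auto
  obtain j where j: "(T ^^ j) (phi a ((Gm ^^ k) a)) = phi a ((Gm ^^ nxt k) a)"
    using visit assms(1) by blast
  have "(T ^^ (j + i)) z = phi a ((Gm ^^ nxt k) a)" using i j by (simp add: funpow_add)
  then show ?thesis unfolding reach_def by blast
qed

lemma matching_if: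
  assumes pos: "\<And>j. 0 < (Gm ^^ j) a" and ex: "\<exists>k\<ge>2. (Gm ^^ k) a < Gm a"
  shows "has_matching a"
proof -
  define k where "k = (LEAST k. k \<ge> 2 \<and> (Gm ^^ k) a < Gm a)"
  have k: "k \<ge> 2" "(Gm ^^ k) a < Gm a" using LeastI_ex[OF ex[simplified Bex_def]] unfolding k_def by auto
  have kmin: "\<And>j. 2 \<le> j \<Longrightarrow> j < k \<Longrightarrow> Gm a \<le> (Gm ^^ j) a"
    using not_less_Least unfolding k_def by fastforce
  have inv: "p + 1 < k \<Longrightarrow> (reach (1 - a) p \<and> reach a (p + 1)) \<or> (reach a p \<and> reach (1 - a) (p + 1))" for p
  proof (induction p)
    case 0
    have "reach (1 - a) 0" unfolding reach_def phi_def by (rule exI[of _ 0]) simp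
    moreover have "reach a 1" unfolding reach_def
      using T_eq[OF a0 ah(2)] ah by (intro exI[of _ 1]) simp
    ultimately show ?case by simp
  next
    case (Suc p)
    have nx: "nxt p = p + 2"
    proof (cases p)
      case 0 then show ?thesis unfolding nxt_def by simp
    next
      case (Suc q)
      then have "Gm a \<le> (Gm ^^ Suc p) a" using kmin[of "Suc p"] Suc.prems by simp
      then show ?thesis unfolding nxt_def by simp
    qed
    from Suc.IH Suc.prems consider "reach (1 - a) p" "reach a (p + 1)" | "reach a p" "reach (1 - a) (p + 1)" by force
    then show ?case
    proof cases
      case 1 then show ?thesis using reach_nxt[OF pos, of "1 - a" p] nx by simp
    next
      case 2 then show ?thesis using reach_nxt[OF pos, of a p] nx by simp
    qed
  qed
  obtain p where p: "k = p + 1" using k by (metis add.commute add_diff_inverse_nat less_one not_less le_trans one_le_numeral)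
  have nx: "nxt p = k" unfolding nxt_def using k p by simp
  have "p + 1 < k \<or> p + 1 = k" using p by simp
  have both: "reach a k \<and> reach (1 - a) k"
  proof (cases p)
    case 0
    then have "k = 1" using p by simp
    then show ?thesis using k by simp
  next
    case (Suc q)
    have iq: "(reach (1 - a) q \<and> reach a (q + 1)) \<or> (reach a q \<and> reach (1 - a) (q + 1))"
      using inv[of q] p Suc by simp
    have nq: "nxt q = p + 1"
    proof (cases q)
      case 0 then show ?thesis unfolding nxt_def using Suc by simp
    next
      case (Suc r)
      then have "Gm a \<le> (Gm ^^ Suc q) a" using kmin[of "Suc q"] p \<open>p = Suc q\<close> by simp
      then show ?thesis unfolding nxt_def using \<open>p = Suc q\<close> by simp
    qed
    have nk: "nxt q = k" using nq p by simp
    from iq show ?thesis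
    proof
      assume h: "reach (1 - a) q \<and> reach a (q + 1)"
      then have "reach (1 - a) k" using reach_nxt[OF pos, of "1 - a" q] nk by simp
      moreover have "reach a k" using reach_nxt[OF pos, of a p] nx h Suc by simp
      ultimately show ?thesis by simp
    next
      assume h: "reach a q \<and> reach (1 - a) (q + 1)"
      then have "reach a k" using reach_nxt[OF pos, of a q] nk by simp
      moreover have "reach (1 - a) k" using reach_nxt[OF pos, of "1 - a" p] nx h Suc by simp
      ultimately show ?thesis by simp
    qed
  qed
  then obtain i j where "(T ^^ i) a = phi a ((Gm ^^ k) a)" "(T ^^ j) (1 - a) = phi a ((Gm ^^ k) a)"
    unfolding reach_def by auto
  then show ?thesis unfolding has_matching_def by metis
qed

end


context
  fixes a :: real
  assumes ah: "1/2 < a" "a < 1"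
begin

lemma le_a:
  assumes pos: "\<And>j. 0 < (Gm ^^ j) a" and ge: "\<And>k. k \<ge> 1 \<Longrightarrow> Gm a \<le> (Gm ^^ k) a"
    and j: "j \<ge> 1"
  shows "(Gm ^^ j) a \<le> a"
proof (rule ccontr)
  define w where "w = (Gm ^^ j) a"
  assume "\<not> (Gm ^^ j) a \<le> a"
  then have wa: "a < w" unfolding w_def by simp
  have w01: "0 < w" "w < 1" using pos[of j] Gm_lt1 j unfolding w_def by (cases j; auto)+
  have "1/w < 2" using ah wa w01 by (simp add: field_simps)
  moreover have "nat \<lfloor>1/w\<rfloor> \<ge> 1" "w = 1/(real (nat \<lfloor>1/w\<rfloor>) + Gm w)" using x_decomp[of w] w01 by auto
  moreover have "1 \<le> 1/w" using w01 by simp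
  ultimately have "\<lfloor>1/w\<rfloor> = 1" by linarith
  then have "w = 1/(1 + Gm w)" using x_decomp[of w] w01 by simp
  moreover have "Gm a \<le> Gm w" using ge[of "Suc j"] j unfolding w_def by simp
  ultimately have "w \<le> a" using le_a_iff[OF ah, of "Gm w"] Gm_ge0 by simp
  then show False using wa by simp
qed

definition Pk :: "bool \<Rightarrow> real \<Rightarrow> bool" where
  "Pk par z \<longleftrightarrow> (\<exists>c i. 1 \<le> c \<and> even c = par \<and> 1 \<le> i \<and> z = uu i ((Gm ^^ c) a))"

lemma nonmatch:
  assumes pos: "\<And>j. 0 < (Gm ^^ j) a" and ge: "\<And>k. k \<ge> 1 \<Longrightarrow> Gm a \<le> (Gm ^^ k) a"
    and inj: "\<And>i j. 1 \<le> i \<Longrightarrow> 1 \<le> j \<Longrightarrow> (Gm ^^ i) a = (Gm ^^ j) a \<Longrightarrow> i = j"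
  shows "\<not> has_matching a"
proof -
  have s01: "0 < (Gm ^^ c) a" "(Gm ^^ c) a < 1" if "c \<ge> 1" for c
    using pos[of c] Gm_lt1 that by (cases c; auto)+
  have flipc: "Pk (odd c) (1 - (Gm ^^ c) a)" if "c \<ge> 1" for c
  proof -
    define w where "w = (Gm ^^ c) a"
    have w01: "0 < w" "w < 1" using s01[OF that] unfolding w_def by auto
    have m1: "nat \<lfloor>1/w\<rfloor> \<ge> 1" and e: "1 - w = uu (nat \<lfloor>1/w\<rfloor>) (Gm w)"
      using flip_uu[OF w01] by auto
    have g: "Gm w = (Gm ^^ (c + 1)) a" unfolding w_def by simp
    have e2: "1 - (Gm ^^ c) a = uu (nat \<lfloor>1/w\<rfloor>) ((Gm ^^ (c + 1)) a)"
      using e unfolding g w_def[symmetric] .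
    have "1 \<le> c + 1" "even (c + 1) = odd c" by auto
    then show ?thesis unfolding Pk_def using e2 m1 by blast
  qed
  have step: "Pk par (T_alpha a z)" if P: "Pk par z" for par z
  proof -
    obtain c i where ci: "1 \<le> c" "even c = par" "1 \<le> i" "z = uu i ((Gm ^^ c) a)"
      using P[unfolded Pk_def] by blast
    define s where "s = (Gm ^^ c) a"
    have s: "0 < s" "s < 1" using s01 ci unfolding s_def by auto
    consider "i \<ge> 3" | "i = 2" | "i = 1" using ci by linarith
    then show ?thesis
    proof cases
      case 1
      then have "T_alpha a z = uu (i - 1) s" using T_uu_ge3[OF ah] s ci s_def by simp
      then show ?thesis unfolding Pk_def using ci 1 s_def by (intro exI[of _ c] exI[of _ "i - 1"]) simp
    next
      case 2
      have "T_alpha a z = phi a (1/(1+s))" using T_uu2[OF ah] s ci 2 s_def by simp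
      also have "\<dots> = uu 1 s" unfolding phi_def uu_def
        using le_a_iff[OF ah, of s] ge[of c] ci s by (simp add: s_def)
      finally show ?thesis unfolding Pk_def using ci s_def by (intro exI[of _ c] exI[of _ 1]) simp
    next
      case 3
      have "T_alpha a z = phi a (Gm s)" using T_uu1[OF ah] s ci 3 s_def by simp
      also have "Gm s = (Gm ^^ Suc c) a" unfolding s_def by simp
      also have "phi a ((Gm ^^ Suc c) a) = 1 - (Gm ^^ Suc c) a"
        unfolding phi_def using le_a[OF pos ge, of "Suc c"] by simp
      finally have "T_alpha a z = 1 - (Gm ^^ Suc c) a" .
      moreover have "Pk (odd (Suc c)) (1 - (Gm ^^ Suc c) a)" using flipc[of "Suc c"] by simp
      ultimately show ?thesis using ci(2) by simp
    qed
  qed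
  have i1: "Pk True (T_alpha a a)"
  proof -
    have "T_alpha a a = phi a (Gm a)" using T_eq[of a a] ah by simp
    also have "\<dots> = 1 - (Gm ^^ 1) a" unfolding phi_def using le_a[OF pos ge, of 1] by simp
    finally show ?thesis using flipc[of 1] by simp
  qed
  have i2: "Pk False (1 - a)"
  proof -
    obtain t where t: "t = Gm a" "a = 1/(1+t)" using a_decomp[OF ah] by blast
    have "1 - a = uu 1 t" unfolding uu_def using t(2) by simp
    then have "1 - a = uu 1 ((Gm ^^ 1) a)" using t(1) by simp
    then show ?thesis unfolding Pk_def by (intro exI[of _ 1] exI[of _ 1]) simp
  qed
  have o1: "Pk True ((T_alpha a ^^ Suc n) a)" for n
  proof (induction n)
    case 0 then show ?case using i1 by simp
  next
    case (Suc n) then show ?case using step[of True "(T_alpha a ^^ Suc n) a"] by simp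
  qed
  have o2: "Pk False ((T_alpha a ^^ n) (1 - a))" for n
  proof (induction n)
    case 0 then show ?case using i2 by simp
  next
    case (Suc n) then show ?case using step[of False "(T_alpha a ^^ n) (1 - a)"] by simp
  qed
  show ?thesis
  proof
    assume "has_matching a"
    then obtain M N where "(T_alpha a ^^ M) a = (T_alpha a ^^ N) (1 - a)" unfolding has_matching_def by auto
    then have "(T_alpha a ^^ Suc M) a = (T_alpha a ^^ Suc N) (1 - a)" by simp
    then have P1: "Pk True ((T_alpha a ^^ Suc M) a)" and P2: "Pk False ((T_alpha a ^^ Suc M) a)"
      using o1[of M] o2[of "Suc N"] by auto
    obtain c i where c1: "1 \<le> c" "even c" "1 \<le> i" and e1: "(T_alpha a ^^ Suc M) a = uu i ((Gm ^^ c) a)"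
      using P1 unfolding Pk_def by blast
    obtain c' i' where c2: "1 \<le> c'" "odd c'" "1 \<le> i'" and e2: "(T_alpha a ^^ Suc M) a = uu i' ((Gm ^^ c') a)"
      using P2 unfolding Pk_def by blast
    have c: "1 \<le> c" "even c" "1 \<le> i" "1 \<le> c'" "odd c'" "1 \<le> i'" using c1 c2 by auto
    have e: "uu i ((Gm ^^ c) a) = uu i' ((Gm ^^ c') a)" using e1 e2 by simp
    define s where "s = (Gm ^^ c) a"
    define s' where "s' = (Gm ^^ c') a"
    have s: "0 < s" "s < 1" "0 < s'" "s' < 1" using s01 c unfolding s_def s'_def by auto
    have "real i + s = real i' + s'" using e s unfolding uu_def s_def[symmetric] s'_def[symmetric]
      by simp
    then have eq: "real i + s = real i' + s'" .
    have "\<lfloor>real i + s\<rfloor> = int i" using s by (intro floor_unique) auto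
    moreover have "\<lfloor>real i' + s'\<rfloor> = int i'" using s by (intro floor_unique) auto
    ultimately have "i = i'" using eq by simp
    then have "i = i'" "s = s'" using eq by auto
    then have "c = c'" using inj c unfolding s_def s'_def by auto
    then show False using c by simp
  qed
qed

end

lemma small_a: assumes "0 < a" "a < 1/2" shows "has_matching a"
proof -
  define n where "n = nat \<lfloor>1/a\<rfloor>"
  define f where "f = Gm a"
  have a1: "a \<le> 1" using assms by simp
  have n1: "n \<ge> 1" and an: "a = 1/(real n + f)" using x_decomp[OF assms(1) a1] n_def f_def by auto
  have f01: "0 \<le> f" "f < 1" using Gm_ge0 Gm_lt1 f_def by auto
  have big: "2 < real n + f" using an assms
  proof -
    have "0 < real n + f" using n1 f01 by simp
    then show ?thesis using assms(2) an by (simp add: field_simps)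
  qed
  have n2: "n \<ge> 2" using big f01 by linarith
  define r where "r = 1/(real n - 1 + f)"
  have r01: "0 < r" "r < 1" using big unfolding r_def by auto
  have ar: "a < r" unfolding r_def an using big by (simp add: frac_less2)
  have e1: "1 - a = 1/(real 1 + r)" unfolding an r_def using big by (simp add: field_simps)
  have "T_alpha a (1 - a) = phi a (Gm (1 - a))" using T_eq assms by simp
  also have "Gm (1 - a) = r" using e1 Gm_inv[of 1 r] r01 by simp
  also have "phi a r = r" unfolding phi_def using ar by simp
  finally have t1: "T_alpha a (1 - a) = r" .
  have "T_alpha a r = phi a (Gm r)" using T_eq assms r01 by simp
  also have "Gm r = f" unfolding r_def using Gm_inv[of "n - 1" f] n2 f01 by (simp add: of_nat_diff)
  finally have t2: "T_alpha a r = phi a f" .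
  have "T_alpha a a = phi a f" using T_eq assms f_def by simp
  then have "(T_alpha a ^^ 1) a = (T_alpha a ^^ 2) (1 - a)" using t1 t2 by (simp add: numeral_2_eq_2)
  then show ?thesis unfolding has_matching_def by blast
qed

lemma Gm_zero_rat: "(Gm ^^ j) x = 0 \<Longrightarrow> x \<in> \<rat>"
proof (induction j arbitrary: x)
  case 0 then show ?case by simp
next
  case (Suc j)
  then have "Gm x \<in> \<rat>" by (simp add: funpow_Suc_right del: funpow.simps)
  moreover have "1/x = Gm x + of_int \<lfloor>1/x\<rfloor>" unfolding Gm_def by simp
  ultimately have "1/x \<in> \<rat>" by (metis Rats_add Rats_of_int)
  then have "inverse (1/x) \<in> \<rat>" by (rule Rats_inverse)
  then show ?case by simp
qed


fun psi :: "nat list \<Rightarrow> real \<Rightarrow> real" where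
  "psi [] x = x"
| "psi (d # w) x = 1 / (real d + psi w x)"

fun mob :: "nat list \<Rightarrow> real \<times> real \<times> real \<times> real" where
  "mob [] = (0, 1, 1, 0)"
| "mob (d # w) = (case mob w of (p, p', q, q') \<Rightarrow> (q, q', real d * q + p, real d * q' + p'))"

definition "Pn w = fst (mob w)"
definition "Pn' w = fst (snd (mob w))"
definition "Qd w = fst (snd (snd (mob w)))"
definition "Qd' w = snd (snd (snd (mob w)))"

lemma mob_simps[simp]:
  "Pn [] = 0" "Pn' [] = 1" "Qd [] = 1" "Qd' [] = 0"
  "Pn (d # w) = Qd w" "Pn' (d # w) = Qd' w"
  "Qd (d # w) = real d * Qd w + Pn w" "Qd' (d # w) = real d * Qd' w + Pn' w"
  unfolding Pn_def Pn'_def Qd_def Qd'_def by (auto split: prod.split)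

definition pw :: "nat list \<Rightarrow> bool" where "pw w \<longleftrightarrow> (\<forall>d\<in>set w. 1 \<le> d)"

lemma pw_simps[simp]: "pw []" "pw (d # w) \<longleftrightarrow> 1 \<le> d \<and> pw w" "pw (u @ v) \<longleftrightarrow> pw u \<and> pw v"
  unfolding pw_def by auto

lemma mob_inv: "pw w \<Longrightarrow> 0 \<le> Pn w \<and> 0 \<le> Pn' w \<and> 1 \<le> Qd w \<and> 0 \<le> Qd' w \<and> Qd' w \<le> Qd w
   \<and> (w \<noteq> [] \<longrightarrow> Pn' w \<le> Pn w)"
proof (induction w)
  case Nil then show ?case by simp
next
  case (Cons d w)
  then have d: "1 \<le> real d" and IH: "0 \<le> Pn w" "0 \<le> Pn' w" "1 \<le> Qd w" "0 \<le> Qd' w" "Qd' w \<le> Qd w"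
      "w \<noteq> [] \<longrightarrow> Pn' w \<le> Pn w" by auto
  have "real d * Qd' w + Pn' w \<le> real d * Qd w + Pn w"
  proof (cases "w = []")
    case True then show ?thesis using d by simp
  next
    case False
    have "real d * Qd' w \<le> real d * Qd w" using IH d by (intro mult_left_mono) auto
    then show ?thesis using IH False by linarith
  qed
  moreover have "1 \<le> real d * Qd w + Pn w"
  proof -
    have "1 * 1 \<le> real d * Qd w" using d IH by (intro mult_mono) auto
    then show ?thesis using IH by linarith
  qed
  ultimately show ?case using IH d by simp
qed

lemma Qd_ge1: "pw w \<Longrightarrow> 1 \<le> Qd w" using mob_inv by blast
lemma Qd'_ge0: "pw w \<Longrightarrow> 0 \<le> Qd' w" using mob_inv by blast
lemma Qd'_le: "pw w \<Longrightarrow> Qd' w \<le> Qd w" using mob_inv by blast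

lemma psi_range: "pw w \<Longrightarrow> 0 \<le> x \<Longrightarrow> x \<le> 1 \<Longrightarrow> 0 \<le> psi w x \<and> psi w x \<le> 1"
  by (induction w) auto

lemma psi_nonneg: "pw w \<Longrightarrow> 0 \<le> x \<Longrightarrow> 0 \<le> psi w x"
  by (induction w) auto

lemma psi_formula: "pw w \<Longrightarrow> 0 \<le> x \<Longrightarrow> psi w x = (Pn w + Pn' w * x) / (Qd w + Qd' w * x)"
proof (induction w)
  case Nil then show ?case by simp
next
  case (Cons d w)
  have pos: "0 < Qd w + Qd' w * x"
  proof -
    have "1 \<le> Qd w" "0 \<le> Qd' w" using mob_inv[of w] Cons.prems by auto
    moreover have "0 \<le> Qd' w * x" using calculation Cons.prems by simp
    ultimately show ?thesis by linarith
  qed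
  have pnn: "0 \<le> Pn w + Pn' w * x" using mob_inv[of w] Cons.prems by simp
  have "psi (d # w) x = 1 / (real d + (Pn w + Pn' w * x) / (Qd w + Qd' w * x))"
    using Cons by simp
  also have "\<dots> = (Qd w + Qd' w * x) / (real d * (Qd w + Qd' w * x) + (Pn w + Pn' w * x))"
    using pos by (simp add: field_simps)
  finally show ?case by (simp add: algebra_simps)
qed

definition den :: "nat list \<Rightarrow> real \<Rightarrow> real" where "den w x = Qd w + Qd' w * x"

lemma den_pos: "pw w \<Longrightarrow> 0 \<le> x \<Longrightarrow> Qd w \<le> den w x"
  unfolding den_def using Qd'_ge0 by simp

lemma den_le: "pw w \<Longrightarrow> 0 \<le> x \<Longrightarrow> x \<le> 1 \<Longrightarrow> den w x \<le> Qd w + Qd' w"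
  unfolding den_def using Qd'_ge0 by (simp add: mult_left_le)

lemma den_cons: assumes "pw (d # w)" "0 \<le> x" shows "den (d # w) x = (real d + psi w x) * den w x"
proof -
  have pos: "0 < den w x" using den_pos[of w x] Qd_ge1[of w] assms by simp
  have "psi w x * den w x = Pn w + Pn' w * x" using psi_formula[of w x] assms pos unfolding den_def by simp
  then show ?thesis unfolding den_def by (simp add: algebra_simps)
qed

lemma psi_dist: "pw w \<Longrightarrow> 0 \<le> x \<Longrightarrow> 0 \<le> y \<Longrightarrow> \<bar>psi w x - psi w y\<bar> = \<bar>x - y\<bar> / (den w x * den w y)"
proof (induction w)
  case Nil then show ?case by (simp add: den_def)
next
  case (Cons d w)
  define X where "X = psi w x"
  define Y where "Y = psi w y"
  have X: "0 \<le> X" "0 \<le> Y" unfolding X_def Y_def using psi_nonneg Cons.prems by auto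
  have d: "1 \<le> real d" using Cons.prems by simp
  have px: "0 < real d + X" "0 < real d + Y" using X d by auto
  have "psi (d # w) x - psi (d # w) y = 1/(real d + X) - 1/(real d + Y)" unfolding X_def Y_def by simp
  also have "\<dots> = (Y - X) / ((real d + X) * (real d + Y))" using px by (simp add: field_simps)
  finally have "\<bar>psi (d # w) x - psi (d # w) y\<bar> = \<bar>X - Y\<bar> / ((real d + X) * (real d + Y))"
    using px by (simp add: abs_minus_commute)
  also have "\<bar>X - Y\<bar> = \<bar>x - y\<bar> / (den w x * den w y)" using Cons unfolding X_def Y_def by simp
  finally show ?case using den_cons Cons.prems unfolding X_def Y_def by (simp add: field_simps)
qed

lemma psi_append: "psi (u @ v) x = psi u (psi v x)"
  by (induction u) auto

lemma den_append: "pw (u @ v) \<Longrightarrow> 0 \<le> x \<Longrightarrow> den (u @ v) x = den u (psi v x) * den v x"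
proof (induction u)
  case Nil then show ?case by (simp add: den_def)
next
  case (Cons d u)
  have pv: "0 \<le> psi v x" using psi_nonneg Cons.prems by auto
  have "den ((d # u) @ v) x = (real d + psi (u @ v) x) * den (u @ v) x"
    using den_cons[of d "u @ v" x] Cons.prems by simp
  also have "\<dots> = (real d + psi u (psi v x)) * (den u (psi v x) * den v x)"
    using Cons psi_append by simp
  also have "\<dots> = den (d # u) (psi v x) * den v x"
    using den_cons[of d u "psi v x"] Cons.prems pv by simp
  finally show ?case .
qed

lemma Q_snoc: assumes "pw w" "1 \<le> d"
  shows "Qd (w @ [d]) = real d * Qd w + Qd' w" "Qd' (w @ [d]) = Qd w"
proof -
  have pw': "pw (w @ [d])" using assms by simp
  have e0: "den (w @ [d]) 0 = den w (1 / real d) * den [d] 0" using den_append[OF pw', of 0] by simp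
  have e1: "den (w @ [d]) 1 = den w (1 / (real d + 1)) * den [d] 1" using den_append[OF pw', of 1] by simp
  have d: "0 < real d" using assms by simp
  have "Qd (w @ [d]) = (Qd w + Qd' w / real d) * real d" using e0 unfolding den_def by simp
  also have "(Qd w + Qd' w / real d) * real d = real d * Qd w + Qd' w" using d by (simp add: distrib_right)
  finally show q: "Qd (w @ [d]) = real d * Qd w + Qd' w" .
  have "Qd (w @ [d]) + Qd' (w @ [d]) = (Qd w + Qd' w / (real d + 1)) * (real d + 1)" using e1 unfolding den_def by simp
  also have "(Qd w + Qd' w / (real d + 1)) * (real d + 1) = Qd w * (real d + 1) + Qd' w"
    using d by (simp add: distrib_right)
  finally show "Qd' (w @ [d]) = Qd w" using q by (simp add: algebra_simps)
qed

definition jl :: "nat list \<Rightarrow> real" where "jl w = 1 / (Qd w * (Qd w + Qd' w))"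

lemma jl_pos: "pw w \<Longrightarrow> 0 < jl w"
proof -
  assume "pw w"
  then have "0 < Qd w" "0 < Qd w + Qd' w" using Qd_ge1[of w] Qd'_ge0[of w] by auto
  then show ?thesis unfolding jl_def by simp
qed

lemma jl_le1: "pw w \<Longrightarrow> jl w \<le> 1"
proof -
  assume "pw w"
  then have "1 * 1 \<le> Qd w * (Qd w + Qd' w)" using Qd_ge1[of w] Qd'_ge0[of w]
    by (intro mult_mono) auto
  then show ?thesis unfolding jl_def by simp
qed

lemma dist_lower: assumes "pw w" "0 \<le> x" "x \<le> 1" "0 \<le> y" "y \<le> 1"
  shows "\<bar>x - y\<bar> * jl w / 2 \<le> \<bar>psi w x - psi w y\<bar>"
proof -
  have q: "1 \<le> Qd w" "0 \<le> Qd' w" "Qd' w \<le> Qd w" using mob_inv[OF assms(1)] by auto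
  have dx: "Qd w \<le> den w x" "den w x \<le> Qd w + Qd' w" using den_pos den_le assms by auto
  have dy: "Qd w \<le> den w y" "den w y \<le> Qd w + Qd' w" using den_pos den_le assms by auto
  have "den w x * den w y \<le> (Qd w + Qd' w) * (Qd w + Qd' w)"
    using dx dy q by (intro mult_mono) auto
  also have "\<dots> \<le> 2 * (Qd w * (Qd w + Qd' w))"
  proof -
    have "Qd' w * (Qd w + Qd' w) \<le> Qd w * (Qd w + Qd' w)" using q by (intro mult_right_mono) auto
    then show ?thesis by (simp add: algebra_simps)
  qed
  finally have le: "den w x * den w y \<le> 2 * (Qd w * (Qd w + Qd' w))" .
  have pp: "0 < den w x * den w y" using dx dy q by simp
  have "\<bar>x - y\<bar> * jl w / 2 = \<bar>x - y\<bar> / (2 * (Qd w * (Qd w + Qd' w)))" unfolding jl_def by simp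
  also have "\<dots> \<le> \<bar>x - y\<bar> / (den w x * den w y)"
    using le pp by (intro divide_left_mono) auto
  finally show ?thesis using psi_dist assms by simp
qed

lemma dist_upper: assumes "pw w" "0 \<le> x" "0 \<le> y"
  shows "\<bar>psi w x - psi w y\<bar> \<le> 2 * jl w * \<bar>x - y\<bar>"
proof -
  have q: "1 \<le> Qd w" "0 \<le> Qd' w" "Qd' w \<le> Qd w" using mob_inv[OF assms(1)] by auto
  have dx: "Qd w \<le> den w x" "Qd w \<le> den w y" using den_pos assms by auto
  have "Qd w * (Qd w + Qd' w) \<le> 2 * (Qd w * Qd w)" using q by (simp add: algebra_simps)
  also have "\<dots> \<le> 2 * (den w x * den w y)" using dx q by (intro mult_left_mono mult_mono) auto
  finally have le: "Qd w * (Qd w + Qd' w) \<le> 2 * (den w x * den w y)" .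
  have pp: "0 < Qd w * (Qd w + Qd' w)" using q by simp
  have "\<bar>x - y\<bar> / (den w x * den w y) \<le> \<bar>x - y\<bar> / ((Qd w * (Qd w + Qd' w)) / 2)"
    using le pp by (intro divide_left_mono) auto
  also have "\<dots> = 2 * jl w * \<bar>x - y\<bar>" unfolding jl_def by simp
  finally show ?thesis using psi_dist assms by simp
qed

lemma jl_dist: "pw w \<Longrightarrow> jl w = \<bar>psi w 0 - psi w 1\<bar>"
  using psi_dist[of w 0 1] unfolding jl_def den_def by simp

lemma jl_append: assumes "pw u" "pw v" shows "jl u * jl v / 2 \<le> jl (u @ v)"
proof -
  have r0: "0 \<le> psi v 0" "psi v 0 \<le> 1" and r1: "0 \<le> psi v 1" "psi v 1 \<le> 1"
    using psi_range[OF assms(2)] by auto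
  have "jl u * jl v / 2 = \<bar>psi v 0 - psi v 1\<bar> * jl u / 2" using jl_dist[OF assms(2)] by simp
  also have "\<dots> \<le> \<bar>psi u (psi v 0) - psi u (psi v 1)\<bar>" using dist_lower[OF assms(1) r0 r1] .
  also have "\<dots> = jl (u @ v)" using jl_dist[of "u @ v"] assms psi_append by simp
  finally show ?thesis .
qed

lemma jl_snoc: assumes "pw w" "1 \<le> d" shows "jl (w @ [d]) = 1 / ((real d * Qd w + Qd' w) * (real d * Qd w + Qd' w + Qd w))"
  unfolding jl_def using Q_snoc[OF assms] by simp

lemma jl_snoc_half: assumes "pw w" "1 \<le> d" shows "jl (w @ [d]) \<le> jl w / 2"
proof -
  have q: "1 \<le> Qd w" "0 \<le> Qd' w" "Qd' w \<le> Qd w" using mob_inv[OF assms(1)] by auto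
  have d: "1 \<le> real d" using assms by simp
  have a1: "Qd w + Qd' w \<le> real d * Qd w + Qd' w" using d q by (simp add: mult_right_mono)
  have "1 * Qd w \<le> real d * Qd w" using d q by (intro mult_right_mono) auto
  then have a2: "2 * Qd w \<le> real d * Qd w + Qd' w + Qd w" using q by linarith
  have "(2 * Qd w) * (Qd w + Qd' w) \<le> (real d * Qd w + Qd' w + Qd w) * (real d * Qd w + Qd' w)"
    using a1 a2 q by (intro mult_mono) auto
  then have "2 * (Qd w * (Qd w + Qd' w)) \<le> (real d * Qd w + Qd' w + Qd w) * (real d * Qd w + Qd' w)"
    by (simp add: mult.assoc)
  then have "2 * (Qd w * (Qd w + Qd' w)) \<le> (real d * Qd w + Qd' w) * (real d * Qd w + Qd' w + Qd w)"
    by (simp add: mult.commute)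
  moreover have z: "0 < Qd w * (Qd w + Qd' w)" using q by simp
  ultimately have "1 / ((real d * Qd w + Qd' w) * (real d * Qd w + Qd' w + Qd w)) \<le> 1 / (2 * (Qd w * (Qd w + Qd' w)))"
    by (intro divide_left_mono) auto
  also have "\<dots> = jl w / 2" unfolding jl_def by simp
  finally show ?thesis using jl_snoc[OF assms] by simp
qed

lemma jl_sum: assumes "pw w"
  shows "(\<Sum>d\<in>{1..M}. jl (w @ [d])) = jl w * (1 - (Qd w + Qd' w) / (Qd w * (real M + 1) + Qd' w))"
proof (induction M)
  case 0
  have "0 < Qd w + Qd' w" using mob_inv[OF assms] by simp
  then show ?case by simp
next
  case (Suc M)
  have q: "1 \<le> Qd w" "0 \<le> Qd' w" using mob_inv[OF assms] by auto
  have s: "(\<Sum>d\<in>{1..Suc M}. jl (w @ [d])) = (\<Sum>d\<in>{1..M}. jl (w @ [d])) + jl (w @ [Suc M])"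
    by simp
  have h1: "0 < Qd w * (real M + 1)" using q by (intro mult_pos_pos) auto
  have h2: "0 < Qd w * (real M + 2)" using q by (intro mult_pos_pos) auto
  have p1: "0 < Qd w * (real M + 1) + Qd' w" using h1 q by linarith
  have p2: "0 < Qd w * (real M + 2) + Qd' w" using h2 q by linarith
  have j: "jl (w @ [Suc M]) = 1 / ((Qd w * (real M + 1) + Qd' w) * (Qd w * (real M + 2) + Qd' w))"
    using jl_snoc[OF assms, of "Suc M"] by (simp add: algebra_simps)
  define A where "A = Qd w * (real M + 1) + Qd' w"
  define B where "B = Qd w * (real M + 2) + Qd' w"
  have BA: "B - A = Qd w" unfolding A_def B_def by (simp add: algebra_simps)
  have A0: "0 < A" and B0: "0 < B" using p1 p2 unfolding A_def B_def by auto
  have "0 < Qd w * (Qd w + Qd' w)" using q by simp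
  then have jq: "jl w * (Qd w + Qd' w) = 1 / Qd w" unfolding jl_def using q by (simp add: field_simps)
  have "1/A - 1/B = (B - A) / (A * B)" using A0 B0 by (simp add: field_simps)
  then have dd: "1/A - 1/B = Qd w / (A * B)" using BA by simp
  have "jl w * (1 - (Qd w + Qd' w) / A) + 1 / (A * B) = jl w * (1 - (Qd w + Qd' w) / B)"
  proof -
    have "jl w * (1 - (Qd w + Qd' w) / B) - jl w * (1 - (Qd w + Qd' w) / A)
        = jl w * (Qd w + Qd' w) * (1/A - 1/B)" using A0 B0 by (simp add: field_simps)
    also have "\<dots> = 1 / (A * B)" unfolding jq dd using q by simp
    finally show ?thesis by simp
  qed
  moreover have "Qd w * (real (Suc M) + 1) + Qd' w = B" unfolding B_def by simp
  ultimately show ?case unfolding s Suc j A_def B_def by simp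
qed


definition dg :: "real \<Rightarrow> nat \<Rightarrow> nat" where "dg x j = nat \<lfloor>1 / (Gm ^^ j) x\<rfloor>"
definition dw :: "real \<Rightarrow> nat \<Rightarrow> nat list" where "dw x n = map (dg x) [0..<n]"

lemma dw_Suc: "dw x (Suc n) = dw x n @ [dg x n]" by (simp add: dw_def)

lemma Gmj_01: assumes "0 < x" "x < 1" "\<And>j. 0 < (Gm ^^ j) x"
  shows "0 < (Gm ^^ j) x" "(Gm ^^ j) x < 1"
proof -
  show "0 < (Gm ^^ j) x" by (rule assms(3))
  show "(Gm ^^ j) x < 1"
  proof (cases j)
    case 0 then show ?thesis using assms(2) by simp
  next
    case (Suc i) then show ?thesis by (simp add: Gm_lt1)
  qed
qed

lemma psi_dw: assumes "0 < x" "x < 1" "\<And>j. 0 < (Gm ^^ j) x"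
  shows "x = psi (dw x n) ((Gm ^^ n) x) \<and> pw (dw x n)"
proof (induction n)
  case 0 then show ?case by (simp add: dw_def)
next
  case (Suc n)
  define y where "y = (Gm ^^ n) x"
  have y: "0 < y" "y \<le> 1" using Gmj_01[OF assms, of n] unfolding y_def by auto
  have d1: "dg x n \<ge> 1" and yd: "y = 1 / (real (dg x n) + Gm y)"
    using x_decomp[OF y] unfolding dg_def y_def by auto
  have g: "Gm y = (Gm ^^ Suc n) x" unfolding y_def by simp
  have "psi (dw x (Suc n)) ((Gm ^^ Suc n) x) = psi (dw x n) (psi [dg x n] ((Gm ^^ Suc n) x))"
    unfolding dw_Suc psi_append by simp
  also have "psi [dg x n] ((Gm ^^ Suc n) x) = y" using yd g by simp
  finally show ?case using Suc d1 unfolding y_def dw_Suc by (simp add: pw_def)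
qed

definition BN :: "nat \<Rightarrow> real set" where
  "BN N = {x. 0 < x \<and> x < 1 \<and> (\<forall>j. 1 / real N \<le> (Gm ^^ j) x)}"

fun words :: "nat \<Rightarrow> nat \<Rightarrow> nat list list" where
  "words D 0 = [[]]"
| "words D (Suc n) = concat (map (\<lambda>w. map (\<lambda>d. w @ [d]) [1..<Suc D]) (words D n))"

lemma words_mem: "length w = n \<Longrightarrow> (\<forall>d\<in>set w. 1 \<le> d \<and> d \<le> D) \<Longrightarrow> w \<in> set (words D n)"
proof (induction n arbitrary: w)
  case 0 then show ?case by simp
next
  case (Suc n)
  obtain u d where w: "w = u @ [d]" using Suc.prems(1) by (auto simp: length_Suc_conv_rev)
  have "u \<in> set (words D n)" using Suc w by auto
  moreover have "d \<in> set [1..<Suc D]" using Suc.prems w by auto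
  ultimately show ?case using w by auto
qed

lemma words_pw: "w \<in> set (words D n) \<Longrightarrow> pw w"
  by (induction n arbitrary: w) (auto simp: pw_def)

lemma sum_list_map_concat: "sum_list (map f (concat xss)) = sum_list (map (\<lambda>xs. sum_list (map f xs)) xss)"
  by (induction xss) auto

lemma inner_sum: assumes "pw w" "D \<ge> 1"
  shows "sum_list (map (\<lambda>d. jl (w @ [d])) [1..<Suc D]) \<le> (1 - 1 / (real D + 1)) * jl w"
proof -
  have q: "1 \<le> Qd w" "0 \<le> Qd' w" using mob_inv[OF assms(1)] by auto
  have "sum_list (map (\<lambda>d. jl (w @ [d])) [1..<Suc D]) = (\<Sum>d\<in>{1..D}. jl (w @ [d]))"
    by (simp only: sum_set_upt_conv_sum_list_nat[symmetric] set_upt atLeastLessThanSuc_atLeastAtMost)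
  also have "\<dots> = jl w * (1 - (Qd w + Qd' w) / (Qd w * (real D + 1) + Qd' w))" using jl_sum[OF assms(1)] .
  also have "\<dots> \<le> jl w * (1 - 1 / (real D + 1))"
  proof -
    have "0 < Qd w * (real D + 1)" using q by (intro mult_pos_pos) auto
    then have p: "0 < Qd w * (real D + 1) + Qd' w" using q by linarith
    have "Qd w * (real D + 1) + Qd' w \<le> (Qd w + Qd' w) * (real D + 1)" using q by (simp add: algebra_simps)
    then have "1 / (real D + 1) \<le> (Qd w + Qd' w) / (Qd w * (real D + 1) + Qd' w)"
      using p by (simp add: field_simps)
    then show ?thesis using jl_pos[OF assms(1)] by (intro mult_left_mono) auto
  qed
  finally show ?thesis by (simp add: mult.commute)
qed

lemma words_sum: assumes "D \<ge> 1" shows "sum_list (map jl (words D n)) \<le> (1 - 1 / (real D + 1)) ^ n"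
proof (induction n)
  case 0 then show ?case by (simp add: jl_def)
next
  case (Suc n)
  have "sum_list (map jl (words D (Suc n))) = sum_list (map (\<lambda>w. sum_list (map (\<lambda>d. jl (w @ [d])) [1..<Suc D])) (words D n))"
    by (simp add: sum_list_map_concat comp_def)
  also have "\<dots> \<le> sum_list (map (\<lambda>w. (1 - 1 / (real D + 1)) * jl w) (words D n))"
    by (rule sum_list_mono) (use inner_sum words_pw assms in blast)
  also have "\<dots> = (1 - 1 / (real D + 1)) * sum_list (map jl (words D n))"
    by (simp add: sum_list_const_mult)
  also have "\<dots> \<le> (1 - 1 / (real D + 1)) * (1 - 1 / (real D + 1)) ^ n"
    using Suc by (intro mult_left_mono) auto
  finally show ?case by simp
qed

lemma BN_cover: assumes "x \<in> BN N" "N \<ge> 1"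
  shows "\<exists>w\<in>set (words N n). \<bar>x - psi w 0\<bar> \<le> 2 * jl w"
proof -
  have x: "0 < x" "x < 1" "\<And>j. 1 / real N \<le> (Gm ^^ j) x" using assms unfolding BN_def by auto
  have N0: "0 < 1 / real N" using assms(2) by simp
  have pos: "\<And>j. 0 < (Gm ^^ j) x" using x(3) N0 less_le_trans by blast
  have e: "x = psi (dw x n) ((Gm ^^ n) x)" and p: "pw (dw x n)" using psi_dw[OF x(1,2) pos] by auto
  have digs: "\<forall>d\<in>set (dw x n). 1 \<le> d \<and> d \<le> N"
  proof
    fix d assume "d \<in> set (dw x n)"
    then obtain j where d: "d = dg x j" unfolding dw_def by auto
    have "1 \<le> d" using p \<open>d \<in> set (dw x n)\<close> unfolding pw_def by auto
    moreover have "1 / (Gm ^^ j) x \<le> real N"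
    proof -
      have "1 / real N \<le> (Gm ^^ j) x" using x(3) .
      then show ?thesis using pos[of j] assms(2) by (simp add: field_simps)
    qed
    then have "d \<le> N" unfolding d dg_def by (simp add: floor_le_iff nat_le_iff)
    ultimately show "1 \<le> d \<and> d \<le> N" by simp
  qed
  have w: "dw x n \<in> set (words N n)" using words_mem digs by (simp add: dw_def)
  have "\<bar>psi (dw x n) ((Gm ^^ n) x) - psi (dw x n) 0\<bar> \<le> 2 * jl (dw x n) * \<bar>(Gm ^^ n) x - 0\<bar>"
    by (rule dist_upper[OF p]) (use pos[of n] in auto)
  also have "\<dots> \<le> 2 * jl (dw x n)" using Gmj_01[OF x(1,2) pos, of n] jl_pos[OF p] by simp
  finally show ?thesis using w e by auto
qed

lemma BN_null: assumes "N \<ge> 1" shows "BN N \<in> null_sets lebesgue"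
proof -
  define c where "c = 1 - 1 / (real N + 1)"
  have c: "0 \<le> c" "c < 1" unfolding c_def by (auto simp: field_simps)
  define I where "I n i = {psi (words N n ! i) 0 - 2 * jl (words N n ! i) .. psi (words N n ! i) 0 + 2 * jl (words N n ! i)}" for n i
  define C where "C n = (\<Union>i\<in>{0..<length (words N n)}. I n i)" for n
  define X where "X = (\<Inter>n. C n)"
  have IS: "I n i \<in> sets lborel" for n i unfolding I_def by simp
  have CS: "C n \<in> sets lborel" for n unfolding C_def using IS by (intro sets.finite_UN) auto
  have XS: "X \<in> sets lborel" unfolding X_def using CS by (intro sets.countable_INT) auto
  have CM: "emeasure lborel (C n) \<le> ennreal (4 * c ^ n)" for n
  proof -
    define ws where "ws = words N n"
    have pws: "\<And>i. i \<in> {0..<length ws} \<Longrightarrow> 0 \<le> 4 * jl (ws ! i)"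
    proof -
      fix i assume "i \<in> {0..<length ws}"
      then have "ws ! i \<in> set ws" by simp
      then have "pw (ws ! i)" using words_pw unfolding ws_def by blast
      then show "0 \<le> 4 * jl (ws ! i)" using jl_pos[of "ws ! i"] by simp
    qed
    have "emeasure lborel (C n) \<le> (\<Sum>i\<in>{0..<length ws}. emeasure lborel (I n i))"
      unfolding C_def ws_def using IS by (intro emeasure_subadditive_finite) auto
    also have "\<dots> = (\<Sum>i\<in>{0..<length ws}. ennreal (4 * jl (ws ! i)))"
    proof (rule sum.cong[OF refl])
      fix i assume i: "i \<in> {0..<length ws}"
      have "0 \<le> 4 * jl (ws ! i)" using pws[OF i] .
      then have "psi (ws ! i) 0 - 2 * jl (ws ! i) \<le> psi (ws ! i) 0 + 2 * jl (ws ! i)" by simp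
      then have "emeasure lborel (I n i) = ennreal ((psi (ws ! i) 0 + 2 * jl (ws ! i)) - (psi (ws ! i) 0 - 2 * jl (ws ! i)))"
        unfolding I_def ws_def by (rule emeasure_lborel_Icc)
      then show "emeasure lborel (I n i) = ennreal (4 * jl (ws ! i))" by simp
    qed
    also have "\<dots> = ennreal (\<Sum>i\<in>{0..<length ws}. 4 * jl (ws ! i))"
      by (rule sum_ennreal) (rule pws)
    also have "(\<Sum>i\<in>{0..<length ws}. 4 * jl (ws ! i)) = 4 * sum_list (map jl ws)"
    proof -
      have "sum_list (map jl ws) = (\<Sum>i\<in>{0..<length ws}. jl (ws ! i))"
        by (subst sum_list_sum_nth) simp
      then show ?thesis by (simp add: sum_distrib_left)
    qed
    also have "\<dots> \<le> 4 * c ^ n" using words_sum[OF assms, of n] unfolding c_def ws_def by simp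
    finally show ?thesis by (simp add: ennreal_leI)
  qed
  have XM: "emeasure lborel X \<le> 0"
  proof (rule ennreal_le_epsilon)
    fix e :: real assume "0 < e"
    then obtain n where n: "c ^ n < e / 4" using real_arch_pow_inv[of "e/4" c] c by auto
    have "emeasure lborel X \<le> emeasure lborel (C n)" unfolding X_def using CS by (intro emeasure_mono) auto
    also have "\<dots> \<le> ennreal (4 * c ^ n)" by (rule CM)
    also have "\<dots> \<le> ennreal e" using n by (intro ennreal_leI) simp
    finally show "emeasure lborel X \<le> 0 + ennreal e" by simp
  qed
  have Xnull: "X \<in> null_sets lborel" using XS XM by (simp add: null_sets_def)
  have sub: "BN N \<subseteq> X"
  proof
    fix x assume x: "x \<in> BN N"
    show "x \<in> X" unfolding X_def
    proof (rule INT_I)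
      fix n
      obtain w where w: "w \<in> set (words N n)" "\<bar>x - psi w 0\<bar> \<le> 2 * jl w" using BN_cover[OF x assms] by blast
      then obtain i where i: "i < length (words N n)" "words N n ! i = w" by (meson in_set_conv_nth)
      have "x \<in> I n i" using i w unfolding I_def by (auto simp: abs_le_iff)
      then show "x \<in> C n" unfolding C_def using i by auto
    qed
  qed
  show ?thesis using sub Xnull null_sets_completion_iff2 by blast
qed


lemma E_sub: "non_matching_set \<subseteq> \<rat> \<union> (\<Union>N. BN (Suc N))"
proof
  fix a assume aE: "a \<in> non_matching_set"
  then have a: "0 < a" "a < 1" "\<not> has_matching a" unfolding non_matching_set_def by auto
  show "a \<in> \<rat> \<union> (\<Union>N. BN (Suc N))"
  proof (cases "a \<in> \<rat>")
    case True then show ?thesis by simp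
  next
    case nq: False
    have "\<not> a < 1/2" using small_a a by blast
    moreover have "a \<noteq> 1/2"
    proof
      assume h: "a = 1/2"
      have "(1/2::real) \<in> \<rat>" by (intro Rats_divide) simp_all
      then have "a \<in> \<rat>" unfolding h .
      then show False using nq by simp
    qed
    ultimately have ah: "1/2 < a" by simp
    have pos: "0 < (Gm ^^ j) a" for j
    proof -
      have "(Gm ^^ j) a \<noteq> 0" using Gm_zero_rat nq by blast
      moreover have "0 \<le> (Gm ^^ j) a" using a by (cases j) (auto simp: Gm_ge0)
      ultimately show ?thesis by simp
    qed
    have ge: "Gm a \<le> (Gm ^^ k) a" if "k \<ge> 2" for k
      using matching_if[OF ah a(2) pos] a(3) that by (meson not_le)
    have g0: "0 < Gm a" using pos[of 1] by simp
    define N where "N = nat \<lceil>1 / Gm a\<rceil> + 1"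
    have N2: "2 \<le> Suc N" unfolding N_def by simp
    have "1 / Gm a \<le> real N" unfolding N_def by linarith
    then have iN: "1 / real (Suc N) \<le> Gm a" using g0
      by (smt (verit, best) divide_le_eq mult.commute of_nat_Suc le_divide_eq pos_le_divide_eq
          frac_le of_nat_0_le_iff)
    have "1 / real (Suc N) \<le> 1/2" using N2 by (simp add: field_simps)
    then have iN0: "1 / real (Suc N) \<le> a" using ah by linarith
    have "\<forall>j. 1 / real (Suc N) \<le> (Gm ^^ j) a"
    proof
      fix j
      show "1 / real (Suc N) \<le> (Gm ^^ j) a"
      proof (cases "j \<ge> 2")
        case True then show ?thesis using ge[OF True] iN by simp
      next
        case False
        then consider "j = 0" | "j = 1" by linarith
        then show ?thesis by cases (use iN iN0 in auto)
      qed
    qed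
    then have "a \<in> BN (Suc N)" unfolding BN_def using a by simp
    then show ?thesis by blast
  qed
qed

theorem E_null: "non_matching_set \<in> null_sets lebesgue"
proof -
  have q: "\<rat> \<in> null_sets lebesgue"
    by (intro null_sets_completionI countable_imp_null_set_lborel countable_rat)
  have b: "(\<Union>N. BN (Suc N)) \<in> null_sets lebesgue"
    by (intro null_sets_UN BN_null) simp
  have "\<rat> \<union> (\<Union>N. BN (Suc N)) \<in> null_sets lebesgue" using q b by (rule null_sets.Un)
  then show ?thesis using E_sub null_sets_completion_subset by blast
qed


lemma ennreal_term_le_suminf: "(f i :: ennreal) \<le> (\<Sum>j. f j)"
proof -
  have "sum f {i} \<le> suminf f" by (rule sum_le_suminf) (auto intro: summableI)
  then show ?thesis by simp
qed

lemma H_zero_gt1: assumes s: "1 < s" and E: "E \<subseteq> {0..1}" shows "hausdorff_measure s E = 0"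
proof -
  have pre: "hausdorff_pre s \<delta> E = 0" if d: "0 < \<delta>" for \<delta>
  proof (rule antisym[OF _ zero_le])
    show "hausdorff_pre s \<delta> E \<le> 0"
    proof (rule ennreal_le_epsilon)
      fix e :: real assume e: "0 < e"
      have t1: "(\<lambda>n. real n powr (1 - s)) \<longlonglongrightarrow> 0"
        using s by (intro tendsto_neg_powr filterlim_real_sequentially) simp
      have ev1: "eventually (\<lambda>n. real n powr (1 - s) < e) sequentially"
        using order_tendstoD(2)[OF t1 e] .
      have ev2: "eventually (\<lambda>n. 1 / real n < \<delta>) sequentially"
        using order_tendstoD(2)[OF lim_1_over_n d] by simp
      have ev3: "eventually (\<lambda>n. 1 \<le> n) sequentially" by (rule eventually_ge_at_top)
      obtain n where n: "real n powr (1 - s) < e" "1 / real n < \<delta>" "1 \<le> n"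
        using eventually_happens'[OF _ eventually_conj[OF ev1 eventually_conj[OF ev2 ev3]]] by auto
      define U where "U i = (if i < n then {real i / real n .. real (Suc i) / real n} else {})" for i
      have cov: "E \<subseteq> (\<Union>i. U i)"
      proof
        fix x assume "x \<in> E"
        then have x: "0 \<le> x" "x \<le> 1" using E by auto
        define i where "i = min (n - 1) (nat \<lfloor>x * real n\<rfloor>)"
        have np: "0 < real n" using n by simp
        have "i < n" unfolding i_def using n by simp
        moreover have "real i / real n \<le> x \<and> x \<le> real (Suc i) / real n"
        proof (cases "nat \<lfloor>x * real n\<rfloor> \<le> n - 1")
          case True
          then have ii: "i = nat \<lfloor>x * real n\<rfloor>" unfolding i_def by simp
          have f0: "0 \<le> \<lfloor>x * real n\<rfloor>" using x np by simp
          have "real i = of_int \<lfloor>x * real n\<rfloor>" unfolding ii using f0 by simp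
          then have "real i \<le> x * real n" "x * real n < real i + 1" by linarith+
          then show ?thesis using np by (simp add: field_simps)
        next
          case False
          then have ii: "i = n - 1" unfolding i_def by simp
          have "x * real n \<ge> real n" using False x np by linarith
          then have "x = 1" using x np by (smt (verit) mult_le_cancel_right1)
          then show ?thesis using ii n np by (simp add: field_simps of_nat_diff)
        qed
        ultimately show "x \<in> (\<Union>i. U i)" unfolding U_def by auto
      qed
      have bd: "bounded (U i) \<and> diameter (U i) \<le> \<delta>" for i
      proof (cases "i < n")
        case True
        have "real i / real n \<le> real (Suc i) / real n" by (simp add: divide_right_mono)
        then have "diameter (U i) = real (Suc i) / real n - real i / real n"
          unfolding U_def using True diameter_closed_interval by simp
        also have "\<dots> = 1 / real n" by (simp add: diff_divide_distrib[symmetric])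
        finally show ?thesis using n(2) unfolding U_def by simp
      next
        case False then show ?thesis unfolding U_def using d by simp
      qed
      have hc: "hcost s (U i) = (if i < n then ennreal ((1 / real n) powr s) else 0)" for i
      proof (cases "i < n")
        case True
        have ne: "U i \<noteq> {}" unfolding U_def using True by (simp add: divide_right_mono)
        have "diameter (U i) = 1 / real n"
        proof -
          have "real i / real n \<le> real (Suc i) / real n" by (simp add: divide_right_mono)
          then have "diameter (U i) = real (Suc i) / real n - real i / real n"
            unfolding U_def using True diameter_closed_interval by simp
          also have "\<dots> = 1 / real n" by (simp add: diff_divide_distrib[symmetric])
          finally show ?thesis .
        qed
        then show ?thesis unfolding hcost_def using ne s True by simp
      next
        case False then show ?thesis unfolding hcost_def U_def by simp
      qed
      have "(\<Sum>i. hcost s (U i)) = (\<Sum>i\<in>{..<n}. hcost s (U i))"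
        by (rule suminf_finite) (auto simp: hc)
      also have "\<dots> = (\<Sum>i\<in>{..<n}. ennreal ((1 / real n) powr s))" by (simp add: hc)
      also have "\<dots> = ennreal (real n * (1 / real n) powr s)"
        by (simp add: ennreal_mult' ennreal_of_nat_eq_real_of_nat)
      also have "real n * (1 / real n) powr s = real n powr (1 - s)"
        using n by (simp add: powr_diff powr_divide)
      finally have sumU: "(\<Sum>i. hcost s (U i)) = ennreal (real n powr (1 - s))" .
      have "hausdorff_pre s \<delta> E \<le> (\<Sum>i. hcost s (U i))"
        unfolding hausdorff_pre_def using cov bd by (intro INF_lower) auto
      also have "\<dots> \<le> ennreal e" unfolding sumU using n(1) by (intro ennreal_leI) simp
      finally show "hausdorff_pre s \<delta> E \<le> 0 + ennreal e" by simp
    qed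
  qed
  show ?thesis unfolding hausdorff_measure_def using pre by simp
qed

lemma H0_pos: assumes "x \<in> E" shows "hausdorff_measure 0 E \<noteq> 0"
proof -
  have "1 \<le> hausdorff_pre 0 1 E"
    unfolding hausdorff_pre_def
  proof (rule INF_greatest)
    fix U :: "nat \<Rightarrow> real set" assume U: "U \<in> {U. E \<subseteq> (\<Union>i. U i) \<and> (\<forall>i. bounded (U i) \<and> diameter (U i) \<le> 1)}"
    then obtain i where "x \<in> U i" using assms by blast
    then have "hcost 0 (U i) = 1" unfolding hcost_def by auto
    then show "1 \<le> (\<Sum>i. hcost 0 (U i))" using ennreal_term_le_suminf[of "\<lambda>i. hcost 0 (U i)" i] by simp
  qed
  moreover have "hausdorff_pre 0 1 E \<le> hausdorff_measure 0 E"
    unfolding hausdorff_measure_def by (rule SUP_upper) simp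
  ultimately show ?thesis by (metis not_one_le_zero order_trans)
qed

lemma H_lower:
  fixes g :: "real \<Rightarrow> real"
  assumes s: "0 < s" and C: "0 < C" and Y: "Y \<in> sets lborel" "emeasure lborel Y = 1"
    and gY: "g ` Y \<subseteq> E" and hol: "\<And>y y'. y \<in> Y \<Longrightarrow> y' \<in> Y \<Longrightarrow> \<bar>y - y'\<bar> \<le> C * \<bar>g y - g y'\<bar> powr s"
  shows "hausdorff_measure s E \<noteq> 0"
proof -
  have key: "ennreal (1 / (2 * C)) \<le> hausdorff_pre s 1 E"
    unfolding hausdorff_pre_def
  proof (rule INF_greatest)
    fix U :: "nat \<Rightarrow> real set" assume "U \<in> {U. E \<subseteq> (\<Union>i. U i) \<and> (\<forall>i. bounded (U i) \<and> diameter (U i) \<le> 1)}"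
    then have cov: "E \<subseteq> (\<Union>i. U i)" and bd: "\<And>i. bounded (U i)" by auto
    define V where "V i = {y \<in> Y. g y \<in> U i}" for i
    define yi where "yi i = (SOME y. y \<in> V i)" for i
    define r where "r i = C * diameter (U i) powr s" for i
    define W where "W i = (if V i = {} then {} else {yi i - r i .. yi i + r i})" for i
    have WS: "W i \<in> sets lborel" for i unfolding W_def by simp
    have YW: "Y \<subseteq> (\<Union>i. W i)"
    proof
      fix y assume y: "y \<in> Y"
      then obtain i where i: "g y \<in> U i" using cov gY by blast
      then have yV: "y \<in> V i" unfolding V_def using y by simp
      then have ne: "V i \<noteq> {}" by auto
      have yiV: "yi i \<in> V i" unfolding yi_def using yV by (rule someI)
      have "\<bar>y - yi i\<bar> \<le> C * \<bar>g y - g (yi i)\<bar> powr s" using hol y yiV unfolding V_def by simp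
      also have "\<bar>g y - g (yi i)\<bar> \<le> diameter (U i)"
        using diameter_bounded_bound[OF bd[of i], of "g y" "g (yi i)"] yV yiV unfolding V_def by (simp add: dist_real_def)
      then have "C * \<bar>g y - g (yi i)\<bar> powr s \<le> r i" unfolding r_def using C s
        by (intro mult_left_mono powr_mono2) auto
      finally have "y \<in> W i" unfolding W_def using ne by (auto simp: abs_le_iff)
      then show "y \<in> (\<Union>i. W i)" by blast
    qed
    have WM: "emeasure lborel (W i) \<le> ennreal (2 * C) * hcost s (U i)" for i
    proof (cases "V i = {}")
      case True then show ?thesis unfolding W_def by simp
    next
      case False
      then have Une: "U i \<noteq> {}" unfolding V_def by auto
      have r0: "0 \<le> r i" unfolding r_def using C by simp
      have "emeasure lborel (W i) = ennreal (2 * r i)" unfolding W_def using False r0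
        by (simp add: emeasure_lborel_Icc)
      also have "\<dots> = ennreal (2 * C) * ennreal (diameter (U i) powr s)"
        unfolding r_def using C by (simp add: ennreal_mult'[symmetric] mult.assoc)
      also have "\<dots> = ennreal (2 * C) * hcost s (U i)" unfolding hcost_def using Une s by simp
      finally show ?thesis by simp
    qed
    have UWS: "(\<Union>i. W i) \<in> sets lborel" by (rule sets.countable_UN) (use WS in auto)
    have "1 = emeasure lborel Y" using Y by simp
    also have "\<dots> \<le> emeasure lborel (\<Union>i. W i)" using YW UWS by (intro emeasure_mono) auto
    also have "\<dots> \<le> (\<Sum>i. emeasure lborel (W i))" using WS by (intro emeasure_subadditive_countably) auto
    also have "\<dots> \<le> (\<Sum>i. ennreal (2 * C) * hcost s (U i))" using WM by (intro suminf_le) auto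
    also have "\<dots> = ennreal (2 * C) * (\<Sum>i. hcost s (U i))" by (rule ennreal_suminf_cmult)
    finally have "1 \<le> ennreal (2 * C) * (\<Sum>i. hcost s (U i))" .
    then have "ennreal (1 / (2 * C)) * 1 \<le> ennreal (1 / (2 * C)) * (ennreal (2 * C) * (\<Sum>i. hcost s (U i)))"
      by (intro mult_left_mono) auto
    also have "\<dots> = (\<Sum>i. hcost s (U i))"
      using C by (simp add: mult.assoc[symmetric] ennreal_mult'[symmetric])
    finally show "ennreal (1 / (2 * C)) \<le> (\<Sum>i. hcost s (U i))" by simp
  qed
  moreover have "hausdorff_pre s 1 E \<le> hausdorff_measure s E"
    unfolding hausdorff_measure_def by (rule SUP_upper) simp
  moreover have "0 < ennreal (1 / (2 * C))" using C by simp
  ultimately show ?thesis by (metis leD order_trans)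
qed

lemma dim_eq_1:
  assumes up: "\<And>s. 1 < s \<Longrightarrow> hausdorff_measure s E = 0"
    and low: "\<And>s. 0 \<le> s \<Longrightarrow> s < 1 \<Longrightarrow> hausdorff_measure s E \<noteq> 0"
  shows "hausdorff_dim E = 1"
proof -
  define S where "S = {s. 0 \<le> s \<and> hausdorff_measure s E = 0}"
  have ne: "2 \<in> S" unfolding S_def using up by simp
  have lb: "\<And>s. s \<in> S \<Longrightarrow> 1 \<le> s" unfolding S_def using low by force
  have bdd: "bdd_below S" unfolding S_def by (rule bdd_belowI[of _ 0]) auto
  have "1 \<le> Inf S" using ne lb by (intro cInf_greatest) auto
  moreover have "Inf S \<le> 1"
  proof (rule field_le_epsilon)
    fix e :: real assume "0 < e"
    then have "1 + e \<in> S" unfolding S_def using up by simp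
    then show "Inf S \<le> 1 + e" using bdd by (rule cInf_lower)
  qed
  ultimately show ?thesis unfolding hausdorff_dim_def S_def[symmetric] by simp
qed


lemma words_props: "w \<in> set (words D n) \<Longrightarrow> length w = n \<and> (\<forall>d\<in>set w. 1 \<le> d \<and> d \<le> D)"
  by (induction n arbitrary: w) auto

lemma words_nonempty: "words D n \<noteq> []" if "1 \<le> D"
proof -
  have "replicate n 1 \<in> set (words D n)" using that by (intro words_mem) auto
  then show ?thesis by auto
qed

lemma words_distinct: assumes D1: "1 \<le> D" shows "distinct (words D n)"
proof (induction n)
  case 0 then show ?case by simp
next
  case (Suc n)
  define f where "f w = map (\<lambda>d. w @ [d]) [1..<Suc D]" for w
  have "distinct (concat (map f (words D n)))"
  proof (rule distinct_concat)
    show "distinct (map f (words D n))"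
    proof -
      have "inj_on f (set (words D n))"
      proof (rule inj_onI)
        fix u v assume "f u = f v"
        then have "hd (f u) = hd (f v)" by simp
        then have "u @ [1] = v @ [1]" unfolding f_def using D1 by (simp add: upt_rec)
        then show "u = v" by simp
      qed
      then show ?thesis using Suc by (simp add: distinct_map)
    qed
  next
    fix ys assume "ys \<in> set (map f (words D n))"
    then show "distinct ys" unfolding f_def by (auto simp: distinct_map inj_on_def)
  next
    fix ys zs assume "ys \<in> set (map f (words D n))" "zs \<in> set (map f (words D n))" "ys \<noteq> zs"
    then obtain u v where "ys = f u" "zs = f v" "u \<noteq> v" by auto
    then show "set ys \<inter> set zs = {}" unfolding f_def by auto
  qed
  then show ?case unfolding f_def by simp
qed

lemma inner_sum_lower: assumes "pw w" "D \<ge> 1"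
  shows "(1 - 2 / (real D + 1)) * jl w \<le> sum_list (map (\<lambda>d. jl (w @ [d])) [1..<Suc D])"
proof -
  have q: "1 \<le> Qd w" "0 \<le> Qd' w" "Qd' w \<le> Qd w" using mob_inv[OF assms(1)] by auto
  have "jl w * (1 - 2 / (real D + 1)) \<le> jl w * (1 - (Qd w + Qd' w) / (Qd w * (real D + 1) + Qd' w))"
  proof -
    have h: "0 < Qd w * (real D + 1)" using q by (intro mult_pos_pos) auto
    then have p: "0 < Qd w * (real D + 1) + Qd' w" using q by linarith
    have "Qd' w * (real D + 1) \<le> Qd w * (real D + 1)" using q by (intro mult_right_mono) auto
    then have "(Qd w + Qd' w) * (real D + 1) \<le> 2 * (Qd w * (real D + 1) + Qd' w)"
      using q by (simp add: algebra_simps)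
    then have "(Qd w + Qd' w) / (Qd w * (real D + 1) + Qd' w) \<le> 2 / (real D + 1)"
      using p by (simp add: field_simps)
    then show ?thesis using jl_pos[OF assms(1)] by (intro mult_left_mono) auto
  qed
  also have "\<dots> = (\<Sum>d\<in>{1..D}. jl (w @ [d]))" using jl_sum[OF assms(1)] by simp
  also have "\<dots> = sum_list (map (\<lambda>d. jl (w @ [d])) [1..<Suc D])"
    by (simp only: sum_set_upt_conv_sum_list_nat[symmetric] set_upt atLeastLessThanSuc_atLeastAtMost)
  finally show ?thesis by (simp add: mult.commute)
qed

lemma words_sum_lower: assumes "D \<ge> 1"
  shows "(1 - 2 / (real D + 1)) ^ n \<le> sum_list (map jl (words D n))"
proof (induction n)
  case 0 then show ?case by (simp add: jl_def)
next
  case (Suc n)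
  have c0: "0 \<le> 1 - 2 / (real D + 1)" using assms by (simp add: field_simps)
  have "(1 - 2 / (real D + 1)) ^ Suc n \<le> (1 - 2 / (real D + 1)) * sum_list (map jl (words D n))"
    using Suc c0 by (simp add: mult_left_mono)
  also have "\<dots> = sum_list (map (\<lambda>w. (1 - 2 / (real D + 1)) * jl w) (words D n))"
    by (simp add: sum_list_const_mult)
  also have "\<dots> \<le> sum_list (map (\<lambda>w. sum_list (map (\<lambda>d. jl (w @ [d])) [1..<Suc D])) (words D n))"
    by (rule sum_list_mono) (use inner_sum_lower words_pw assms in blast)
  also have "\<dots> = sum_list (map jl (words D (Suc n)))"
    by (simp add: sum_list_map_concat comp_def)
  finally show ?case .
qed

lemma jl_len: "pw w \<Longrightarrow> jl w \<le> (1/2) ^ length w"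
proof (induction w rule: rev_induct)
  case Nil then show ?case by (simp add: jl_def)
next
  case (snoc d w)
  then have "jl (w @ [d]) \<le> jl w / 2" using jl_snoc_half by simp
  also have "\<dots> \<le> (1/2) ^ length w / 2" using snoc by simp
  finally show ?case by simp
qed

definition RR :: "nat \<Rightarrow> real set" where "RR N = {1 / real N .. real N / (real N + 1)}"

definition dgt :: "nat \<Rightarrow> nat list \<Rightarrow> bool" where "dgt N w \<longleftrightarrow> (\<forall>d\<in>set w. 1 \<le> d \<and> d + 1 \<le> N)"

lemma dgt_simps[simp]: "dgt N []" "dgt N (d # w) \<longleftrightarrow> 1 \<le> d \<and> d + 1 \<le> N \<and> dgt N w"
  "dgt N (u @ v) \<longleftrightarrow> dgt N u \<and> dgt N v"
  unfolding dgt_def by auto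

lemma dgt_pw: "dgt N w \<Longrightarrow> pw w" unfolding dgt_def pw_def by auto

lemma RR_sub: "N \<ge> 1 \<Longrightarrow> x \<in> RR N \<Longrightarrow> 0 < x \<and> x < 1"
proof -
  assume N: "N \<ge> 1" and x: "x \<in> RR N"
  have a: "0 < 1 / real N" "real N / (real N + 1) < 1" using N by auto
  have b: "1 / real N \<le> x" "x \<le> real N / (real N + 1)" using x unfolding RR_def by auto
  show ?thesis using a b by (intro conjI; linarith)
qed

lemma psi1_RR: assumes "N \<ge> 1" "1 \<le> d" "d + 1 \<le> N" "x \<in> RR N" shows "1 / (real d + x) \<in> RR N"
proof -
  have x: "1 / real N \<le> x" "x \<le> real N / (real N + 1)" using assms(4) unfolding RR_def by auto
  have "real N / (real N + 1) \<le> 1" by simp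
  then have x1: "x \<le> 1" using x(2) by linarith
  have d: "1 \<le> real d" "real d + 1 \<le> real N" using assms by auto
  have "0 < 1 / real N" using assms(1) by simp
  then have xp: "0 < x" using x(1) by linarith
  have lo: "1 / real N \<le> 1 / (real d + x)"
    using d x1 xp by (intro divide_left_mono) auto
  have "1 + 1 / real N \<le> real d + x" using d x(1) by simp
  moreover have "0 \<le> 1 / real N" by simp
  then have "0 < 1 + 1 / real N" by linarith
  moreover have "0 < real d + x" using d xp by auto
  ultimately have "1 / (real d + x) \<le> 1 / (1 + 1 / real N)" by (intro divide_left_mono) auto
  also have "1 / (1 + 1 / real N) = real N / (real N + 1)" using assms(1) by (simp add: field_simps)
  finally show ?thesis using lo unfolding RR_def by simp
qed

lemma psi_RR: "N \<ge> 1 \<Longrightarrow> dgt N w \<Longrightarrow> x \<in> RR N \<Longrightarrow> psi w x \<in> RR N"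
  by (induction w) (auto intro: psi1_RR)

lemma Gm_psi: assumes "N \<ge> 1" "dgt N w" "x \<in> RR N"
  shows "(Gm ^^ length w) (psi w x) = x \<and> (\<forall>j\<le>length w. (Gm ^^ j) (psi w x) \<in> RR N)"
  using assms(2)
proof (induction w)
  case Nil then show ?case using assms by simp
next
  case (Cons d w)
  have pr: "psi w x \<in> RR N" using psi_RR assms Cons by simp
  then have "0 \<le> psi w x" "psi w x < 1" using RR_sub assms(1) by fastforce+
  then have g: "Gm (1 / (real d + psi w x)) = psi w x" using Gm_inv[of d "psi w x"] Cons by simp
  have e: "(Gm ^^ Suc j) (psi (d # w) x) = (Gm ^^ j) (psi w x)" for j
    by (simp add: funpow_Suc_right g del: funpow.simps)
  have "(Gm ^^ length (d # w)) (psi (d # w) x) = x" using e Cons by simp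
  moreover have "(Gm ^^ j) (psi (d # w) x) \<in> RR N" if "j \<le> length (d # w)" for j
  proof (cases j)
    case 0 then show ?thesis using psi_RR[of N "d # w" x] assms Cons by simp
  next
    case (Suc i) then show ?thesis using e Cons that by simp
  qed
  ultimately show ?case by blast
qed

lemma sep: assumes N: "N \<ge> 1"
  shows "dgt N V \<Longrightarrow> dgt N V' \<Longrightarrow> length V = length V' \<Longrightarrow> V \<noteq> V' \<Longrightarrow> r \<in> RR N \<Longrightarrow> r' \<in> RR N \<Longrightarrow>
    (1 / (real N)\<^sup>2) ^ length V / (real N + 1) \<le> \<bar>psi V r - psi V' r'\<bar>"
proof (induction V arbitrary: V')
  case Nil then show ?case by simp
next
  case (Cons d V)
  then obtain d' W where V': "V' = d' # W" by (cases V') auto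
  have X: "psi V r \<in> RR N" "psi W r' \<in> RR N" using psi_RR N Cons V' by auto
  define X where "X = psi V r"
  define X' where "X' = psi W r'"
  have Xr: "1 / real N \<le> X" "X \<le> real N / (real N + 1)" "1 / real N \<le> X'" "X' \<le> real N / (real N + 1)"
    using X unfolding RR_def X_def X'_def by auto
  have Np: "0 < real N" using N by simp
  have "0 < 1 / real N" using Np by simp
  then have X0: "0 < X" "0 < X'" using Xr by linarith+
  have "real N / (real N + 1) \<le> 1" by simp
  then have X1: "X \<le> 1" "X' \<le> 1" using Xr by linarith+
  have dd: "1 \<le> real d" "real d + 1 \<le> real N" "1 \<le> real d'" "real d' + 1 \<le> real N"
    using Cons V' by auto
  have den: "(real d + X) * (real d' + X') \<le> real N ^ 2"
  proof -
    have "real d + X \<le> real N" "real d' + X' \<le> real N" using dd X1 by linarith+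
    then have "(real d + X) * (real d' + X') \<le> real N * real N" using X0 dd by (intro mult_mono) auto
    then show ?thesis by (simp add: power2_eq_square)
  qed
  have dpos: "0 < (real d + X) * (real d' + X')" using X0 dd by simp
  have eq: "psi (d # V) r - psi V' r' = (real d' + X' - real d - X) / ((real d + X) * (real d' + X'))"
    unfolding V' X_def X'_def using X0 dd by (simp add: X_def X'_def field_simps)
  show ?case
  proof (cases "d = d'")
    case False
    have "\<bar>X' - X\<bar> \<le> real N / (real N + 1) - 1 / real N" using Xr by linarith
    also have "\<dots> = 1 - 1 / (real N + 1) - 1 / real N" using Np by (simp add: field_simps)
    finally have xx: "\<bar>X' - X\<bar> \<le> 1 - 1 / (real N + 1) - 1 / real N" .
    have c0: "0 \<le> 1 / real N" by simp
    have xx2: "X' - X \<le> 1 - 1 / (real N + 1) - 1 / real N" "X - X' \<le> 1 - 1 / (real N + 1) - 1 / real N"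
      using xx by (auto simp: abs_le_iff)
    have "real d + 1 \<le> real d' \<or> real d' + 1 \<le> real d" using False by (cases "d < d'") auto
    then have num: "1 / (real N + 1) \<le> \<bar>real d' + X' - real d - X\<bar>"
    proof
      assume h: "real d + 1 \<le> real d'"
      then have "1 / (real N + 1) \<le> real d' + X' - real d - X" using xx2 c0 by linarith
      then show ?thesis by linarith
    next
      assume h: "real d' + 1 \<le> real d"
      then have "1 / (real N + 1) \<le> -(real d' + X' - real d - X)" using xx2 c0 by linarith
      then show ?thesis by linarith
    qed
    have "(1 / (real N)\<^sup>2) ^ length (d # V) / (real N + 1) \<le> 1 / (real N)\<^sup>2 / (real N + 1)"
    proof -
      have b1: "1 / (real N)\<^sup>2 \<le> 1" using N by (simp add: field_simps)
      have "(1 / (real N)\<^sup>2) ^ length V \<le> 1" using b1 by (intro power_le_one) auto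
      then have "(1 / (real N)\<^sup>2) * (1 / (real N)\<^sup>2) ^ length V \<le> (1 / (real N)\<^sup>2) * 1"
        by (intro mult_left_mono) auto
      then have "(1 / (real N)\<^sup>2) ^ length (d # V) \<le> 1 / (real N)\<^sup>2" by simp
      then show ?thesis by (intro divide_right_mono) auto
    qed
    also have "\<dots> = (1 / (real N + 1)) / real N ^ 2" by (simp add: field_simps)
    also have "\<dots> \<le> \<bar>real d' + X' - real d - X\<bar> / ((real d + X) * (real d' + X'))"
      using num den dpos by (intro frac_le) auto
    also have "\<dots> = \<bar>psi (d # V) r - psi V' r'\<bar>" using eq dpos by simp
    finally show ?thesis .
  next
    case True
    then have WV: "W \<noteq> V" "length V = length W" "dgt N W" using Cons V' by auto
    have IH: "(1 / (real N)\<^sup>2) ^ length V / (real N + 1) \<le> \<bar>X - X'\<bar>"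
      using Cons.IH[of W] Cons.prems WV V' unfolding X_def X'_def by auto
    have "(1 / (real N)\<^sup>2) ^ length (d # V) / (real N + 1) = ((1 / (real N)\<^sup>2) ^ length V / (real N + 1)) / real N ^ 2"
      by (simp add: field_simps)
    also have "\<dots> \<le> \<bar>X - X'\<bar> / ((real d + X) * (real d' + X'))"
      using IH den dpos by (intro frac_le) auto
    also have "\<dots> = \<bar>psi (d # V) r - psi V' r'\<bar>" using eq dpos True by (simp add: abs_minus_commute)
    finally show ?thesis .
  qed
qed


lemma powr_pow: "0 \<le> (x::real) \<Longrightarrow> (x ^ n) powr a = (x powr a) ^ n"
  by (induction n) (auto simp: powr_mult)

locale cod =
  fixes N l :: nat and s :: real
  assumes N3: "3 \<le> N" and l1: "1 \<le> l" and s0: "0 < s" and s1: "s < 1"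
    and Zge: "2 \<le> sum_list (map (\<lambda>v. jl v powr s) (words (N - 1) l))"
begin

definition "blks = words (N - 1) l"
definition "K = length blks"
definition "blk i = blks ! i"
definition "Z = sum_list (map (\<lambda>v. jl v powr s) blks)"
definition "p i = jl (blk i) powr s / Z"
definition "c i = (\<Sum>j<i. p j)"
definition "idx y = (LEAST i. y < c (Suc i))"
definition "L y = (y - c (idx y)) / p (idx y)"
definition "sig j y = idx ((L ^^ j) y)"
definition "W k y = concat (map (\<lambda>j. blk (sig j y)) [0..<k])"
definition "m k y = (\<Prod>j<k. p (sig j y))"

lemma N1: "1 \<le> N" using N3 by simp

lemma blk_props: "i < K \<Longrightarrow> length (blk i) = l \<and> dgt N (blk i) \<and> pw (blk i)"
proof -
  assume "i < K"
  then have "blk i \<in> set (words (N - 1) l)" unfolding blk_def K_def blks_def by simp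
  then have h: "length (blk i) = l" "\<forall>d\<in>set (blk i). 1 \<le> d \<and> d \<le> N - 1" using words_props by blast+
  then have "dgt N (blk i)" unfolding dgt_def using N3 by auto
  then show ?thesis using h dgt_pw by blast
qed

lemma K1: "1 \<le> K"
proof -
  have "blks \<noteq> []" unfolding blks_def using N3 by (intro words_nonempty) simp
  then show ?thesis unfolding K_def by (cases blks) auto
qed

lemma blk_inj: "i < K \<Longrightarrow> j < K \<Longrightarrow> blk i = blk j \<Longrightarrow> i = j"
  unfolding blk_def K_def using words_distinct[of "N - 1" l] N3 nth_eq_iff_index_eq unfolding blks_def by fastforce

lemma Z_eq: "Z = (\<Sum>i<K. jl (blk i) powr s)"
  unfolding Z_def K_def blk_def by (simp add: sum_list_sum_nth atLeast0LessThan)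

lemma Z2: "2 \<le> Z" using Zge unfolding Z_def blks_def .

lemma p_nonneg: "0 \<le> p i" unfolding p_def using Z2 by simp

lemma p_pos: "i < K \<Longrightarrow> 0 < p i"
proof -
  assume "i < K"
  then have "pw (blk i)" using blk_props by blast
  then have "0 < jl (blk i)" by (rule jl_pos)
  then have "0 < jl (blk i) powr s" by simp
  moreover have "0 < Z" using Z2 by simp
  ultimately show ?thesis unfolding p_def by simp
qed

lemma c_Suc: "c (Suc i) = c i + p i" unfolding c_def by simp
lemma c0: "c 0 = 0" unfolding c_def by simp
lemma cK: "c K = 1"
proof -
  have "c K = (\<Sum>j<K. jl (blk j) powr s) / Z" unfolding c_def p_def by (simp add: sum_divide_distrib)
  then show ?thesis using Z_eq Z2 by simp
qed

lemma idx_props: assumes "0 \<le> y" "y < 1" shows "idx y < K" "c (idx y) \<le> y" "y < c (idx y) + p (idx y)"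
proof -
  have ex: "y < c (Suc (K - 1))" using K1 cK assms by simp
  have l: "y < c (Suc (idx y))" unfolding idx_def by (rule LeastI[of _ "K - 1"]) (rule ex)
  have "idx y \<le> K - 1" unfolding idx_def by (rule Least_le) (rule ex)
  then show "idx y < K" using K1 by simp
  show "y < c (idx y) + p (idx y)" using l c_Suc by simp
  show "c (idx y) \<le> y"
  proof (cases "idx y")
    case 0 then show ?thesis using c0 assms by simp
  next
    case (Suc i)
    then have "i < idx y" by simp
    then have "\<not> y < c (Suc i)" unfolding idx_def by (rule not_less_Least)
    then show ?thesis using Suc by simp
  qed
qed

lemma L_props: assumes "0 \<le> y" "y < 1" shows "0 \<le> L y" "L y < 1" "y = c (idx y) + p (idx y) * L y"
proof -
  have i: "idx y < K" "c (idx y) \<le> y" "y < c (idx y) + p (idx y)" using idx_props assms by auto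
  have pp: "0 < p (idx y)" using p_pos i by simp
  show "0 \<le> L y" unfolding L_def using i pp by simp
  show "L y < 1" unfolding L_def using i pp by (simp add: field_simps)
  show "y = c (idx y) + p (idx y) * L y" unfolding L_def using pp by simp
qed

lemma Lj: assumes "0 \<le> y" "y < 1" shows "0 \<le> (L ^^ j) y \<and> (L ^^ j) y < 1"
  by (induction j) (use assms L_props in auto)

lemma sig_Suc: "sig (Suc j) y = sig j (L y)"
  unfolding sig_def by (simp add: funpow_Suc_right del: funpow.simps)

lemma sig0: "sig 0 y = idx y" unfolding sig_def by simp

lemma sig_shift: "sig j ((L ^^ k) y) = sig (j + k) y"
  unfolding sig_def by (simp add: funpow_add)

lemma sig_K: "0 \<le> y \<Longrightarrow> y < 1 \<Longrightarrow> sig j y < K"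
  unfolding sig_def using idx_props Lj by blast

lemma W_Suc: "W (Suc k) y = W k y @ blk (sig k y)" unfolding W_def by simp

lemma W_Suc': "W (Suc k) y = blk (sig 0 y) @ W k (L y)"
proof -
  have "[0..<Suc k] = 0 # map Suc [0..<k]" by (simp add: map_Suc_upt upt_conv_Cons)
  then show ?thesis unfolding W_def by (simp add: sig_Suc comp_def)
qed

lemma W_props: assumes "0 \<le> y" "y < 1" shows "dgt N (W k y) \<and> length (W k y) = k * l \<and> pw (W k y)"
proof (induction k)
  case 0 then show ?case unfolding W_def by simp
next
  case (Suc k)
  have "sig k y < K" using sig_K assms by simp
  then have "length (blk (sig k y)) = l" "dgt N (blk (sig k y))" using blk_props by auto
  then show ?case using Suc dgt_pw unfolding W_Suc by auto
qed

lemma W_cong: "(\<And>j. j < k \<Longrightarrow> sig j y = sig j y') \<Longrightarrow> W k y = W k y'"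
  unfolding W_def by (intro arg_cong[where f = concat] map_cong) auto

lemma m_Suc: "m (Suc k) y = m k y * p (sig k y)" unfolding m_def by simp
lemma m_Suc': "m (Suc k) y = p (sig 0 y) * m k (L y)"
  unfolding m_def by (subst prod.lessThan_Suc_shift) (simp add: sig_Suc)

lemma close: "0 \<le> y \<Longrightarrow> y < 1 \<Longrightarrow> 0 \<le> y' \<Longrightarrow> y' < 1 \<Longrightarrow> (\<And>j. j < k \<Longrightarrow> sig j y = sig j y') \<Longrightarrow>
   \<bar>y - y'\<bar> \<le> m k y"
proof (induction k arbitrary: y y')
  case 0 then show ?case unfolding m_def by simp
next
  case (Suc k)
  have i: "idx y = idx y'" using Suc.prems(5)[of 0] by (simp add: sig0)
  have e: "y = c (idx y) + p (idx y) * L y" "y' = c (idx y) + p (idx y) * L y'"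
    using L_props Suc.prems i by metis+
  have h: "sig j (L y) = sig j (L y')" if "j < k" for j
  proof -
    have "sig (Suc j) y = sig (Suc j) y'" using Suc.prems(5) that by simp
    then show ?thesis by (simp add: sig_Suc)
  qed
  have "\<bar>L y - L y'\<bar> \<le> m k (L y)"
    using Suc.IH[of "L y" "L y'"] L_props Suc.prems h by simp
  then have "p (idx y) * \<bar>L y - L y'\<bar> \<le> p (idx y) * m k (L y)" using p_nonneg by (intro mult_left_mono) auto
  moreover have "\<bar>y - y'\<bar> = p (idx y) * \<bar>L y - L y'\<bar>"
  proof -
    have "y - y' = p (idx y) * (L y - L y')" using e by (simp add: algebra_simps)
    then show ?thesis using p_nonneg by (simp add: abs_mult)
  qed
  ultimately show ?case using m_Suc' sig0 by simp
qed

lemma mk_le: assumes "0 \<le> y" "y < 1" shows "m k y \<le> jl (W k y) powr s"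
proof (induction k)
  case 0 then show ?case unfolding m_def W_def by (simp add: jl_def)
next
  case (Suc k)
  define B where "B = blk (sig k y)"
  have Bp: "pw B" using blk_props sig_K assms unfolding B_def by blast
  have Wp: "pw (W k y)" using W_props assms by blast
  have "m (Suc k) y = m k y * (jl B powr s / Z)" unfolding m_Suc p_def B_def by simp
  also have "\<dots> \<le> jl (W k y) powr s * (jl B powr s / Z)"
    using Suc Z2 by (intro mult_right_mono) auto
  also have "\<dots> \<le> jl (W k y) powr s * (jl B powr s / 2 powr s)"
  proof -
    have "2 powr s \<le> 2 powr 1" using s1 by (intro powr_mono) auto
    then have "2 powr s \<le> Z" using Z2 by simp
    moreover have "0 < Z * 2 powr s" using Z2 by simp
    ultimately have "jl B powr s / Z \<le> jl B powr s / 2 powr s" by (intro divide_left_mono) auto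
    then show ?thesis by (intro mult_left_mono) auto
  qed
  also have "\<dots> = (jl (W k y) * jl B / 2) powr s"
    using jl_pos[OF Wp] jl_pos[OF Bp] by (simp add: powr_mult powr_divide)
  also have "\<dots> \<le> jl (W k y @ B) powr s"
    using jl_append[OF Wp Bp] jl_pos[OF Wp] jl_pos[OF Bp] s0 by (intro powr_mono2) auto
  finally show ?case unfolding W_Suc B_def .
qed

lemma m_small: assumes "0 \<le> y" "y < 1" shows "m k y \<le> ((1/2) powr s) ^ k"
proof -
  have Wp: "pw (W k y)" and len: "length (W k y) = k * l" using W_props assms by auto
  have "jl (W k y) \<le> (1/2) ^ (k * l)" using jl_len[OF Wp] len by simp
  also have "\<dots> \<le> (1/2) ^ k" using l1 by (intro power_decreasing) auto
  finally have "jl (W k y) powr s \<le> ((1/2) ^ k) powr s" using jl_pos[OF Wp] s0 by (intro powr_mono2) auto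
  also have "\<dots> = ((1/2) powr s) ^ k" by (simp add: powr_pow)
  finally show ?thesis using mk_le[OF assms, of k] by simp
qed

lemma sig_det: assumes "0 \<le> y" "y < 1" "0 \<le> y'" "y' < 1" "\<And>j. sig j y = sig j y'"
  shows "y = y'"
proof -
  have "\<bar>y - y'\<bar> \<le> 0"
  proof (rule field_le_epsilon)
    fix e :: real assume e: "0 < e"
    have "(1/2) powr s < 1 powr s" using s0 by (intro powr_less_mono2) auto
    then have "(1/2) powr s < 1" by simp
    then obtain k where k: "((1/2) powr s) ^ k < e" using real_arch_pow_inv[OF e] by blast
    have "\<bar>y - y'\<bar> \<le> m k y" using close assms by blast
    also have "\<dots> \<le> ((1/2) powr s) ^ k" using m_small assms by blast
    finally show "\<bar>y - y'\<bar> \<le> 0 + e" using k by simp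
  qed
  then show ?thesis by simp
qed

end


lemma psi_tendsto: assumes "pw v" "X \<longlonglongrightarrow> a" "\<And>n. 0 \<le> X n" "0 \<le> a"
  shows "(\<lambda>n. psi v (X n)) \<longlonglongrightarrow> psi v a"
proof -
  have q: "1 \<le> Qd v" "0 \<le> Qd' v" using mob_inv[OF assms(1)] by auto
  have "0 \<le> Qd' v * a" using q assms by simp
  then have d: "Qd v + Qd' v * a \<noteq> 0" using q by linarith
  have "(\<lambda>n. (Pn v + Pn' v * X n) / (Qd v + Qd' v * X n)) \<longlonglongrightarrow> (Pn v + Pn' v * a) / (Qd v + Qd' v * a)"
    using assms(2) d by (intro tendsto_intros) auto
  moreover have "\<And>n. psi v (X n) = (Pn v + Pn' v * X n) / (Qd v + Qd' v * X n)"
    using psi_formula assms by blast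
  moreover have "psi v a = (Pn v + Pn' v * a) / (Qd v + Qd' v * a)" using psi_formula assms by blast
  ultimately show ?thesis by simp
qed

context cod
begin

definition "x0 = 1 / real N"
definition "bk k y = psi (W k y) x0"
definition "bb y = lim (\<lambda>k. bk k y)"
definition "gam = (1 / (real N)\<^sup>2) ^ l / (real N + 1)"

lemma RR01: "x \<in> RR N \<Longrightarrow> 0 < x \<and> x < 1" using RR_sub N1 by blast

lemma x0R: "x0 \<in> RR N"
proof -
  have n3: "3 \<le> real N" using N3 by simp
  have "3 * real N \<le> real N * real N" using n3 by (intro mult_right_mono) auto
  then have "real N + 1 \<le> real N * real N" using n3 by linarith
  then have "1 / real N \<le> real N / (real N + 1)" using N3 by (simp add: field_simps)
  then show ?thesis unfolding x0_def RR_def by simp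
qed

lemma bk_R: "0 \<le> y \<Longrightarrow> y < 1 \<Longrightarrow> bk k y \<in> RR N"
  unfolding bk_def using psi_RR[OF N1] W_props x0R by blast

lemma bk_step: assumes "0 \<le> y" "y < 1" shows "\<bar>bk (Suc k) y - bk k y\<bar> \<le> 2 * (1/2) ^ k"
proof -
  define B where "B = blk (sig k y)"
  have Bd: "dgt N B" using blk_props sig_K assms unfolding B_def by blast
  have Wp: "pw (W k y)" and len: "length (W k y) = k * l" using W_props assms by auto
  have a: "psi B x0 \<in> RR N" using psi_RR[OF N1 Bd x0R] .
  have a01: "0 < psi B x0" "psi B x0 < 1" "0 < x0" "x0 < 1" using RR01 a x0R by auto
  have "bk (Suc k) y = psi (W k y) (psi B x0)" unfolding bk_def W_Suc B_def psi_append ..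
  then have "\<bar>bk (Suc k) y - bk k y\<bar> \<le> 2 * jl (W k y) * \<bar>psi B x0 - x0\<bar>"
    unfolding bk_def using dist_upper[OF Wp] a01 by simp
  also have "\<dots> \<le> 2 * jl (W k y) * 1" using a01 jl_pos[OF Wp] by (intro mult_left_mono) auto
  also have "jl (W k y) \<le> (1/2) ^ k"
  proof -
    have "jl (W k y) \<le> (1/2) ^ (k * l)" using jl_len[OF Wp] len by simp
    also have "\<dots> \<le> (1/2) ^ k" using l1 by (intro power_decreasing) auto
    finally show ?thesis .
  qed
  finally show ?thesis by simp
qed

lemma bk_conv: assumes "0 \<le> y" "y < 1" shows "(\<lambda>k. bk k y) \<longlonglongrightarrow> bb y"
proof -
  define f where "f k = bk (Suc k) y - bk k y" for k
  have "summable (\<lambda>k. 2 * (1/2::real) ^ k)" by (intro summable_mult summable_geometric) simp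
  then have sf: "summable f"
    by (rule summable_comparison_test'[where N = 0]) (use bk_step assms in \<open>simp add: f_def\<close>)
  have "(\<lambda>n. sum f {..<n}) \<longlonglongrightarrow> suminf f" by (rule summable_LIMSEQ[OF sf])
  then have "(\<lambda>n. bk 0 y + sum f {..<n}) \<longlonglongrightarrow> bk 0 y + suminf f" by (intro tendsto_add) auto
  moreover have "bk 0 y + sum f {..<n} = bk n y" for n
    unfolding f_def using sum_lessThan_telescope[of "\<lambda>k. bk k y" n] by simp
  ultimately have "(\<lambda>n. bk n y) \<longlonglongrightarrow> bk 0 y + suminf f" by simp
  then have "convergent (\<lambda>k. bk k y)" unfolding convergent_def by blast
  then show ?thesis unfolding bb_def by (simp add: convergent_LIMSEQ_iff)
qed

lemma bb_R: assumes "0 \<le> y" "y < 1" shows "bb y \<in> RR N"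
proof -
  have "1 / real N \<le> bb y" using bk_conv[OF assms] bk_R[OF assms]
    by (intro LIMSEQ_le_const) (auto simp: RR_def)
  moreover have "bb y \<le> real N / (real N + 1)" using bk_conv[OF assms] bk_R[OF assms]
    by (intro LIMSEQ_le_const2) (auto simp: RR_def)
  ultimately show ?thesis unfolding RR_def by simp
qed

lemma bb_rec: assumes "0 \<le> y" "y < 1" shows "bb y = psi (blk (sig 0 y)) (bb (L y))"
proof -
  have Ly: "0 \<le> L y" "L y < 1" using L_props assms by auto
  define B where "B = blk (sig 0 y)"
  have Bp: "pw B" using blk_props sig_K assms unfolding B_def by blast
  have e: "bk (Suc k) y = psi B (bk k (L y))" for k unfolding bk_def W_Suc' B_def psi_append ..
  have "(\<lambda>k. bk (Suc k) y) \<longlonglongrightarrow> bb y" using bk_conv[OF assms] by (rule LIMSEQ_Suc)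
  moreover have "(\<lambda>k. psi B (bk k (L y))) \<longlonglongrightarrow> psi B (bb (L y))"
    using psi_tendsto[OF Bp bk_conv[OF Ly]] bk_R[OF Ly] bb_R[OF Ly] RR01 by (meson less_imp_le)
  ultimately show ?thesis unfolding e B_def by (rule LIMSEQ_unique)
qed

lemma bb_W: "0 \<le> y \<Longrightarrow> y < 1 \<Longrightarrow> bb y = psi (W k y) (bb ((L ^^ k) y))"
proof (induction k arbitrary: y)
  case 0 then show ?case unfolding W_def by simp
next
  case (Suc k)
  have Ly: "0 \<le> L y" "L y < 1" using L_props Suc.prems by auto
  have "bb y = psi (blk (sig 0 y)) (bb (L y))" using bb_rec Suc.prems by simp
  also have "bb (L y) = psi (W k (L y)) (bb ((L ^^ k) (L y)))" using Suc.IH Ly by simp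
  finally show ?case unfolding W_Suc' psi_append by (simp add: funpow_Suc_right del: funpow.simps)
qed

lemma Gm_bb: assumes "0 \<le> y" "y < 1"
  shows "(Gm ^^ (k * l)) (bb y) = bb ((L ^^ k) y)" "(Gm ^^ j) (bb y) \<in> RR N"
proof -
  have Lk: "0 \<le> (L ^^ k) y" "(L ^^ k) y < 1" using Lj assms by auto
  have Wd: "dgt N (W k y)" "length (W k y) = k * l" using W_props assms by auto
  have g: "(Gm ^^ length (W k y)) (psi (W k y) (bb ((L ^^ k) y))) = bb ((L ^^ k) y)"
    "\<forall>j\<le>length (W k y). (Gm ^^ j) (psi (W k y) (bb ((L ^^ k) y))) \<in> RR N"
    using Gm_psi[OF N1 Wd(1) bb_R[OF Lk]] by auto
  show "(Gm ^^ (k * l)) (bb y) = bb ((L ^^ k) y)" using g(1) Wd(2) bb_W[OF assms, of k] by simp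
  have "(Gm ^^ j) (psi (W j y) (bb ((L ^^ j) y))) \<in> RR N"
  proof -
    have Wj: "dgt N (W j y)" "length (W j y) = j * l" using W_props assms by auto
    have Lj': "0 \<le> (L ^^ j) y" "(L ^^ j) y < 1" using Lj assms by auto
    have "j \<le> length (W j y)" using Wj(2) l1 by simp
    then show ?thesis using Gm_psi[OF N1 Wj(1) bb_R[OF Lj']] by blast
  qed
  then show "(Gm ^^ j) (bb y) \<in> RR N" using bb_W[OF assms, of j] by simp
qed

lemma gam_pos: "0 < gam" unfolding gam_def using N3 by simp

lemma gap: assumes y: "0 \<le> y" "y < 1" and y': "0 \<le> y'" "y' < 1"
  and eq: "\<And>j. j < k \<Longrightarrow> sig j y = sig j y'" and ne: "sig k y \<noteq> sig k y'"
  shows "gam * jl (W k y) / 2 \<le> \<bar>bb y - bb y'\<bar>"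
proof -
  have Wc: "W k y = W k y'" using W_cong eq by blast
  have Wp: "pw (W k y)" using W_props y by blast
  have Lk: "0 \<le> (L ^^ k) y" "(L ^^ k) y < 1" "0 \<le> (L ^^ k) y'" "(L ^^ k) y' < 1" using Lj y y' by auto
  define z where "z = bb ((L ^^ k) y)"
  define z' where "z' = bb ((L ^^ k) y')"
  have zR: "z \<in> RR N" "z' \<in> RR N" unfolding z_def z'_def using bb_R Lk by auto
  have z01: "0 \<le> z" "z \<le> 1" "0 \<le> z'" "z' \<le> 1" using RR01 zR by (meson less_imp_le)+
  have L1: "0 \<le> L ((L ^^ k) y)" "L ((L ^^ k) y) < 1" "0 \<le> L ((L ^^ k) y')" "L ((L ^^ k) y') < 1"
    using L_props Lk by auto
  have zz: "z = psi (blk (sig k y)) (bb (L ((L ^^ k) y)))" "z' = psi (blk (sig k y')) (bb (L ((L ^^ k) y')))"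
    unfolding z_def z'_def using bb_rec Lk sig_shift[of 0 k] by auto
  have sk: "sig k y < K" "sig k y' < K" using sig_K y y' by auto
  have bne: "blk (sig k y) \<noteq> blk (sig k y')" using blk_inj sk ne by blast
  have bp: "dgt N (blk (sig k y))" "dgt N (blk (sig k y'))" "length (blk (sig k y)) = l" "length (blk (sig k y')) = l"
    using blk_props sk by auto
  have "gam \<le> \<bar>z - z'\<bar>" unfolding zz gam_def
    using sep[OF N1 bp(1,2)] bp(3,4) bne bb_R L1 by simp
  have "\<bar>z - z'\<bar> * jl (W k y) / 2 \<le> \<bar>psi (W k y) z - psi (W k y) z'\<bar>"
    using dist_lower[OF Wp] z01 by simp
  moreover have "gam * jl (W k y) / 2 \<le> \<bar>z - z'\<bar> * jl (W k y) / 2"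
    using \<open>gam \<le> \<bar>z - z'\<bar>\<close> jl_pos[OF Wp] by (simp add: divide_right_mono mult_right_mono)
  moreover have "bb y = psi (W k y) z" using bb_W[OF y, of k] unfolding z_def by simp
  moreover have "bb y' = psi (W k y) z'" using bb_W[OF y', of k] Wc unfolding z'_def by simp
  ultimately show ?thesis by simp
qed

lemma bb_inj: assumes "0 \<le> y" "y < 1" "0 \<le> y'" "y' < 1" "bb y = bb y'" shows "sig j y = sig j y'"
proof (rule ccontr)
  assume "sig j y \<noteq> sig j y'"
  then have ex: "\<exists>k. sig k y \<noteq> sig k y'" by blast
  define k where "k = (LEAST k. sig k y \<noteq> sig k y')"
  have kn: "sig k y \<noteq> sig k y'" unfolding k_def using LeastI_ex[OF ex] .
  have ke: "\<And>j. j < k \<Longrightarrow> sig j y = sig j y'" unfolding k_def using not_less_Least by blast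
  have "gam * jl (W k y) / 2 \<le> \<bar>bb y - bb y'\<bar>" using gap assms ke kn by blast
  moreover have "0 < gam * jl (W k y) / 2" using gam_pos jl_pos W_props assms by simp
  ultimately show False using assms by simp
qed

lemma hol_bb: assumes "0 \<le> y" "y < 1" "0 \<le> y'" "y' < 1"
  shows "\<bar>y - y'\<bar> \<le> (2 / gam) powr s * \<bar>bb y - bb y'\<bar> powr s"
proof (cases "\<forall>j. sig j y = sig j y'")
  case True
  then have "y = y'" using sig_det assms by blast
  then show ?thesis by simp
next
  case False
  then have ex: "\<exists>k. sig k y \<noteq> sig k y'" by blast
  define k where "k = (LEAST k. sig k y \<noteq> sig k y')"
  have kn: "sig k y \<noteq> sig k y'" unfolding k_def using LeastI_ex[OF ex] .
  have ke: "\<And>j. j < k \<Longrightarrow> sig j y = sig j y'" unfolding k_def using not_less_Least by blast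
  have g: "gam * jl (W k y) / 2 \<le> \<bar>bb y - bb y'\<bar>" using gap assms ke kn by blast
  have Wp: "pw (W k y)" using W_props assms by blast
  have "jl (W k y) \<le> 2 / gam * \<bar>bb y - bb y'\<bar>" using g gam_pos by (simp add: field_simps)
  then have "jl (W k y) powr s \<le> (2 / gam * \<bar>bb y - bb y'\<bar>) powr s"
    using jl_pos[OF Wp] s0 by (intro powr_mono2) auto
  also have "\<dots> = (2 / gam) powr s * \<bar>bb y - bb y'\<bar> powr s" using gam_pos by (intro powr_mult)
  finally have "jl (W k y) powr s \<le> (2 / gam) powr s * \<bar>bb y - bb y'\<bar> powr s" .
  moreover have "\<bar>y - y'\<bar> \<le> m k y" using close assms ke by blast
  moreover have "m k y \<le> jl (W k y) powr s" using mk_le assms by blast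
  ultimately show ?thesis by linarith
qed

end


context cod
begin

definition "aa y = psi [1, N] (bb y)"
definition "Qs = {y \<in> {0..<1}. \<exists>p per. 0 < per \<and> (\<forall>n\<ge>p. sig (n + per) y = sig n y)}"
definition "Cst = (2 / gam) powr s * (2 / jl [1, N]) powr s"

lemma pw1N: "pw [1, N]" using N3 by simp

lemma Cst_pos: "0 < Cst"
  unfolding Cst_def using gam_pos jl_pos[OF pw1N] by simp

lemma hol_aa: assumes "0 \<le> y" "y < 1" "0 \<le> y'" "y' < 1"
  shows "\<bar>y - y'\<bar> \<le> Cst * \<bar>aa y - aa y'\<bar> powr s"
proof -
  have b: "0 \<le> bb y" "bb y \<le> 1" "0 \<le> bb y'" "bb y' \<le> 1" using bb_R RR01 assms by (meson less_imp_le)+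
  have j: "0 < jl [1, N]" using jl_pos[OF pw1N] .
  have "\<bar>bb y - bb y'\<bar> * jl [1, N] / 2 \<le> \<bar>aa y - aa y'\<bar>"
    unfolding aa_def using dist_lower[OF pw1N b] .
  then have "\<bar>bb y - bb y'\<bar> \<le> 2 / jl [1, N] * \<bar>aa y - aa y'\<bar>" using j by (simp add: field_simps)
  then have "\<bar>bb y - bb y'\<bar> powr s \<le> (2 / jl [1, N] * \<bar>aa y - aa y'\<bar>) powr s"
    using s0 by (intro powr_mono2) auto
  also have "\<dots> = (2 / jl [1, N]) powr s * \<bar>aa y - aa y'\<bar> powr s" using j by (intro powr_mult)
  finally have "(2 / gam) powr s * \<bar>bb y - bb y'\<bar> powr s \<le> (2 / gam) powr s * ((2 / jl [1, N]) powr s * \<bar>aa y - aa y'\<bar> powr s)"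
    by (intro mult_left_mono) auto
  then show ?thesis using hol_bb[OF assms] unfolding Cst_def by (simp add: mult.assoc)
qed

lemma aa_E: assumes y: "y \<in> {0..<1} - Qs" shows "aa y \<in> non_matching_set"
proof -
  have y01: "0 \<le> y" "y < 1" using y by auto
  define b where "b = bb y"
  define t where "t = 1 / (real N + b)"
  define a where "a = aa y"
  have bR: "b \<in> RR N" unfolding b_def using bb_R y01 by simp
  have b01: "0 < b" "b < 1" using RR01 bR by auto
  have Nb: "1 < real N + b" using N3 b01 by simp
  have t01: "0 < t" "t < 1" unfolding t_def using Nb by auto
  have at: "a = 1 / (1 + t)" unfolding a_def aa_def t_def b_def by simp
  have a12: "1/2 < a" "a < 1" unfolding at using t01 by (auto simp: field_simps)
  have g1: "Gm a = t" unfolding at using Gm_inv[of 1 t] t01 by simp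
  have g2: "Gm t = b" unfolding t_def using Gm_inv[of N b] N3 b01 by simp
  have gj: "(Gm ^^ Suc (Suc j)) a = (Gm ^^ j) b" for j
    by (simp add: funpow_Suc_right g1 g2 del: funpow.simps)
  have bj: "(Gm ^^ j) b \<in> RR N" for j unfolding b_def using Gm_bb y01 by blast
  have pos: "0 < (Gm ^^ j) a" for j
  proof (cases j)
    case 0 then show ?thesis using a12 by simp
  next
    case (Suc i) note i = this
    show ?thesis
    proof (cases i)
      case 0 then show ?thesis using i g1 t01 by simp
    next
      case (Suc k) then show ?thesis using i gj bj RR01 by simp
    qed
  qed
  have ge: "Gm a \<le> (Gm ^^ k) a" if "k \<ge> 1" for k
  proof (cases "k = 1")
    case True then show ?thesis by simp
  next
    case False
    have k2: "2 \<le> k" using that False by simp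
    define j where "j = k - 2"
    have k: "k = Suc (Suc j)" unfolding j_def using k2 by arith
    have "1 / real N \<le> (Gm ^^ j) b" using bj[of j] unfolding RR_def by simp
    moreover have "t \<le> 1 / real N" unfolding t_def using b01 N3 by (simp add: frac_le)
    ultimately show ?thesis unfolding k gj g1 by simp
  qed
  have injlt: False if ij: "1 \<le> i" "i < j" "(Gm ^^ i) a = (Gm ^^ j) a" for i j
  proof -
    define per where "per = j - i"
    have per0: "0 < per" unfolding per_def using ij by simp
    have h1: "(Gm ^^ n) a = (Gm ^^ (n + per)) a" if "i \<le> n" for n
    proof -
      define d where "d = n - i"
      have d: "n = d + i" using that unfolding d_def by simp
      have "(Gm ^^ n) a = (Gm ^^ d) ((Gm ^^ i) a)" unfolding d by (simp add: funpow_add)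
      also have "\<dots> = (Gm ^^ d) ((Gm ^^ j) a)" using ij(3) by (rule arg_cong)
      also have "\<dots> = (Gm ^^ (d + j)) a" by (simp add: funpow_add)
      also have "d + j = n + per" unfolding per_def d using ij by simp
      finally show ?thesis .
    qed
    have h2: "(Gm ^^ m) b = (Gm ^^ (m + per)) b" if "i \<le> m" for m
    proof -
      have "(Gm ^^ m) b = (Gm ^^ Suc (Suc m)) a" by (rule gj[symmetric])
      also have "\<dots> = (Gm ^^ (Suc (Suc m) + per)) a" using h1[of "Suc (Suc m)"] that by linarith
      also have "Suc (Suc m) + per = Suc (Suc (m + per))" by simp
      also have "(Gm ^^ Suc (Suc (m + per))) a = (Gm ^^ (m + per)) b" by (rule gj)
      finally show ?thesis .
    qed
    have h3: "(Gm ^^ m) b = (Gm ^^ (m + q * per)) b" if "i \<le> m" for q m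
    proof (induction q)
      case 0 then show ?case by simp
    next
      case (Suc q)
      have "(Gm ^^ (m + q * per)) b = (Gm ^^ (m + q * per + per)) b" using h2[of "m + q * per"] that by linarith
      moreover have "m + q * per + per = m + Suc q * per" by simp
      ultimately show ?case using Suc by metis
    qed
    have h5: "sig (n + per) y = sig n y" if "i \<le> n" for n
    proof -
      have "n * 1 \<le> n * l" using l1 by (rule mult_le_mono2)
      then have "i \<le> n * l" using that by linarith
      then have "(Gm ^^ (n * l)) b = (Gm ^^ (n * l + l * per)) b" using h3[of "n * l" l] by (simp add: mult.commute)
      moreover have "n * l + l * per = (n + per) * l" by (simp add: algebra_simps)
      ultimately have "bb ((L ^^ n) y) = bb ((L ^^ (n + per)) y)"
        using Gm_bb(1)[OF y01, of n] Gm_bb(1)[OF y01, of "n + per"] unfolding b_def by simp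
      moreover have "0 \<le> (L ^^ n) y" "(L ^^ n) y < 1" "0 \<le> (L ^^ (n + per)) y" "(L ^^ (n + per)) y < 1"
        using Lj[OF y01] by auto
      ultimately have "sig 0 ((L ^^ n) y) = sig 0 ((L ^^ (n + per)) y)"
        using bb_inj[of "(L ^^ n) y" "(L ^^ (n + per)) y" 0] by simp
      then show ?thesis using sig_shift[of 0 n y] sig_shift[of 0 "n + per" y] by simp
    qed
    have "\<exists>p per. 0 < per \<and> (\<forall>n\<ge>p. sig (n + per) y = sig n y)"
      using per0 h5 by blast
    then have "y \<in> Qs" unfolding Qs_def using y01 by simp
    then show False using y by simp
  qed
  have inj: "i = j" if "1 \<le> i" "1 \<le> j" "(Gm ^^ i) a = (Gm ^^ j) a" for i j
  proof (rule ccontr)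
    assume "i \<noteq> j"
    then consider "i < j" | "j < i" by linarith
    then show False
    proof cases
      case 1 then show False using injlt[of i j] that by simp
    next
      case 2 then show False using injlt[of j i] that by simp
    qed
  qed
  have "\<not> has_matching a" using nonmatch[OF a12 pos ge inj] by blast
  then show ?thesis unfolding non_matching_set_def a_def[symmetric] using a12 by simp
qed

lemma Qs_countable: "countable Qs"
proof -
  define Qp where "Qp pp = {y \<in> {0..<1::real}. 0 < snd pp \<and> (\<forall>n\<ge>fst pp. sig (n + snd pp) y = sig n y)}" for pp :: "nat \<times> nat"
  have sub: "Qs \<subseteq> (\<Union>pp\<in>UNIV. Qp pp)" unfolding Qs_def Qp_def by force
  have "countable (Qp pp)" for pp
  proof -
    obtain p0 per where pp: "pp = (p0, per)" by (cases pp)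
    define f where "f y = map (\<lambda>n. sig n y) [0..<p0 + per]" for y
    have "inj_on f (Qp pp)"
    proof (rule inj_onI)
      fix y y' assume yQ: "y \<in> Qp pp" "y' \<in> Qp pp" and fe: "f y = f y'"
      have y: "0 \<le> y" "y < 1" "0 < per" "\<And>n. p0 \<le> n \<Longrightarrow> sig (n + per) y = sig n y"
        using yQ(1) unfolding Qp_def pp by auto
      have y': "0 \<le> y'" "y' < 1" "\<And>n. p0 \<le> n \<Longrightarrow> sig (n + per) y' = sig n y'"
        using yQ(2) unfolding Qp_def pp by auto
      have low: "sig n y = sig n y'" if "n < p0 + per" for n
        using fe that unfolding f_def by (simp add: map_eq_conv)
      have all: "sig n y = sig n y'" for n
      proof (induction n rule: less_induct)
        case (less n)
        show ?case
        proof (cases "n < p0 + per")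
          case True then show ?thesis using low by simp
        next
          case False
          define n' where "n' = n - per"
          have n': "n = n' + per" "p0 \<le> n'" "n' < n" unfolding n'_def using False y(3) by auto
          have "sig n y = sig n' y" using y(4)[OF n'(2)] n'(1) by simp
          also have "\<dots> = sig n' y'" using less n'(3) by simp
          also have "\<dots> = sig n y'" using y'(3)[OF n'(2)] n'(1) by simp
          finally show ?thesis .
        qed
      qed
      show "y = y'" using sig_det y(1,2) y'(1,2) all by blast
    qed
    moreover have "countable (f ` Qp pp)" by (rule countableI_type)
    ultimately show ?thesis using countable_image_inj_on by blast
  qed
  then have "countable (\<Union>pp\<in>UNIV. Qp pp)" by (intro countable_UN) auto
  then show ?thesis using sub countable_subset by blast
qed

lemma Y_props: "({0..<1} - Qs) \<in> sets lborel" "emeasure lborel ({0..<1} - Qs) = 1"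
proof -
  have qn: "Qs \<in> null_sets lborel" using Qs_countable by (rule countable_imp_null_set_lborel)
  then have "Qs \<in> sets lborel" by auto
  then show "({0..<1} - Qs) \<in> sets lborel" by auto
  show "emeasure lborel ({0..<1} - Qs) = 1" using emeasure_Diff_null_set[OF qn, of "{0..<1}"]
    by (simp add: emeasure_lborel_Ico)
qed

lemma E_lower: "hausdorff_measure s non_matching_set \<noteq> 0"
proof (rule H_lower[OF s0 Cst_pos Y_props, of aa])
  show "aa ` ({0..<1} - Qs) \<subseteq> non_matching_set" using aa_E by blast
next
  fix y y' assume "y \<in> {0..<1} - Qs" "y' \<in> {0..<1} - Qs"
  then show "\<bar>y - y'\<bar> \<le> Cst * \<bar>aa y - aa y'\<bar> powr s" using hol_aa by auto
qed

lemma E_ne: "\<exists>x. x \<in> non_matching_set"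
proof -
  have "({0..<1} - Qs) \<noteq> {}"
  proof
    assume h: "{0..<1} - Qs = {}"
    have "emeasure lborel ({0..<1} - Qs) = 0" unfolding h by (rule emeasure_empty)
    then show False using Y_props(2) by simp
  qed
  then obtain y where "y \<in> {0..<1} - Qs" by blast
  then show ?thesis using aa_E by blast
qed

end


lemma params_exist: assumes s: "0 < s" "s < 1" shows "\<exists>N l. cod N l s"
proof -
  define b0 where "b0 = (2::real) powr (1 - s)"
  have b0: "1 < b0" unfolding b0_def using s by (intro gr_one_powr) auto
  have q0: "0 < 1 - 1 / b0" using b0 by (simp add: field_simps)
  define N where "N = nat \<lceil>2 / (1 - 1 / b0)\<rceil> + 3"
  have N3: "3 \<le> N" unfolding N_def by simp
  have "2 / (1 - 1 / b0) \<le> real (nat \<lceil>2 / (1 - 1 / b0)\<rceil>)" by linarith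
  then have Nb: "2 / (1 - 1 / b0) < real N" unfolding N_def by simp
  have Np: "0 < real N" using N3 by simp
  have "2 < real N * (1 - 1 / b0)" using Nb q0 by (simp add: field_simps)
  then have "2 / real N < 1 - 1 / b0" using Np by (simp add: field_simps)
  then have t1: "1 / b0 < 1 - 2 / real N" by simp
  define be where "be = b0 * (1 - 2 / real N)"
  have be1: "1 < be"
  proof -
    have "b0 * (1 / b0) < b0 * (1 - 2 / real N)" using t1 b0 by (intro mult_strict_left_mono) auto
    then show ?thesis unfolding be_def using b0 by simp
  qed
  obtain l0 where l0: "2 < be ^ l0" using real_arch_pow[OF be1] by blast
  define l where "l = Suc l0"
  have "be ^ l0 \<le> be ^ l" unfolding l_def using be1 by (intro power_increasing) auto
  then have bel: "2 < be ^ l" using l0 by simp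
  define ws where "ws = words (N - 1) l"
  have each: "b0 ^ l * jl v \<le> jl v powr s" if "v \<in> set ws" for v
  proof -
    have vp: "pw v" using words_pw that unfolding ws_def by blast
    have vl: "length v = l" using words_props that unfolding ws_def by blast
    have jp: "0 < jl v" using jl_pos[OF vp] .
    have jle: "jl v \<le> (1/2) ^ l" using jl_len[OF vp] vl by simp
    have "((1/2) ^ l) powr (s - 1) \<le> jl v powr (s - 1)" using s jp jle by (intro powr_mono2') auto
    moreover have "((1/2::real) ^ l) powr (s - 1) = b0 ^ l"
    proof -
      have "(1/2::real) powr (s - 1) = 1 / 2 powr (s - 1)" by (simp add: powr_divide)
      also have "\<dots> = 2 powr (- (s - 1))" by (rule powr_minus_divide[symmetric])
      also have "\<dots> = b0" unfolding b0_def by simp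
      finally show ?thesis by (simp add: powr_pow)
    qed
    ultimately have "b0 ^ l \<le> jl v powr (s - 1)" by simp
    then have "jl v * b0 ^ l \<le> jl v * jl v powr (s - 1)" using jp by (intro mult_left_mono) auto
    also have "\<dots> = jl v powr (1 + (s - 1))" using jp by (intro powr_mult_base) simp
    finally show ?thesis by (simp add: mult.commute)
  qed
  have "be ^ l = b0 ^ l * (1 - 2 / (real (N - 1) + 1)) ^ l"
    unfolding be_def using N3 by (simp add: power_mult_distrib of_nat_diff)
  also have "\<dots> \<le> b0 ^ l * sum_list (map jl ws)"
    unfolding ws_def using words_sum_lower[of "N - 1" l] N3 b0 by (intro mult_left_mono) auto
  also have "\<dots> = sum_list (map (\<lambda>v. b0 ^ l * jl v) ws)" by (simp add: sum_list_const_mult)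
  also have "\<dots> \<le> sum_list (map (\<lambda>v. jl v powr s) ws)" by (rule sum_list_mono) (rule each)
  finally have Z: "2 \<le> sum_list (map (\<lambda>v. jl v powr s) (words (N - 1) l))" using bel unfolding ws_def by simp
  have "cod N l s" by unfold_locales (use N3 s Z in \<open>auto simp: l_def\<close>)
  then show ?thesis by blast
qed

theorem theorem1p1:
  shows "non_matching_set \<in> null_sets lebesgue \<and> hausdorff_dim non_matching_set = 1"
proof
  show "non_matching_set \<in> null_sets lebesgue" by (rule E_null)
  obtain N l where c: "cod N l (1/2)" using params_exist[of "1/2"] by auto
  obtain x where x: "x \<in> non_matching_set" using cod.E_ne[OF c] by blast
  show "hausdorff_dim non_matching_set = 1"
  proof (rule dim_eq_1)
    fix s :: real assume "1 < s"
    moreover have "non_matching_set \<subseteq> {0..1}" unfolding non_matching_set_def by auto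
    ultimately show "hausdorff_measure s non_matching_set = 0" by (rule H_zero_gt1)
  next
    fix s :: real assume s: "0 \<le> s" "s < 1"
    show "hausdorff_measure s non_matching_set \<noteq> 0"
    proof (cases "s = 0")
      case True then show ?thesis using H0_pos[OF x] by simp
    next
      case False
      then have "0 < s" using s by simp
      then obtain N l where "cod N l s" using params_exist s by blast
      then show ?thesis by (rule cod.E_lower)
    qed
  qed
qed


end
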